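(* Let $M$ be a commutative and cocommutative Hopf algebra over $\mathbb{C}$ and $A$ a commutative $\mathbb{C}$-algebra. Each map $\mathrm{EQ}_r$ (for $r$ an $A$-valued bicharacter on $M$) is invertible, with inverse $\mathrm{EQ}_{r^{-1}}$. Moreover, if $r_1,r_2$ are $A$-valued bicharacters on $M$ with symmetrizations $s_1,s_2$ respectively, then \[ \mathrm{EQ}_{r_2}\circ\mathrm{EQ}_{r_1^{-1}}\colon (M_A,\bullet_{s_1})\to (M_A,\bullet_{s_2}) \] is a homomorphism from the multiplication $\bullet_{s_1}$ to the multiplication $\bullet_{s_2}$.
   Context: For a Hopf algebra $M$ with coproduct $\Delta$, counit $\eta$ and antipode $S$, Sweedler notation is used: $\Delta(a)=\sum a'\otimes a''$, $\Delta^2(a)=\sum a'\otimes a''\otimes a'''$. An $A$-valued bicharacter on $M$ is a linear map $r:M\otimes M\to A$ such that for all $a,b,c\in M$: $r(1\otimes a)=\eta(a)=r(a\otimes 1)$, $r(ab\otimes c)=\sum r(a\otimes c')r(b\otimes c'')$, $r(a\otimes bc)=\sum r(a'\otimes b)r(a''\otimes c)$. Convolution: $(r\circ t)(a\otimes b)=\sum r(a'\otimes b')t(a''\otimes b'')$; $r^t(a\otimes b)=r(b\otimes a)$; the inverse bicharacter is $r^{-1}(a\otimes b)=r(S(a)\otimes b)$. The symmetrization of $r$ is $s=r\circ r^t$. $M_A=M\otimes_{\mathbb{C}}A$. For a symmetric bicharacter $t$ (i.e. $t=t^t$), $\bullet_t$ is the $A$-bilinear product on $M_A$ extending $a\bullet_t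 b=\sum a'b'\,t(a''\otimes b'')$. The map $\mathrm{EQ}_r(m)=\sum r(m'\otimes m'')m'''$ is extended $A$-linearly to $M_A\to M_A$. *)

theory Defs
  imports Complex_Main
begin

text \<open>Elements of tensor products are represented by
  finite formal sums (lists of pairs / triples); two formal sums denote the same
  element of the algebraic tensor product iff all complex-valued multilinear
  forms agree on them (valid over a field).\<close>

definition bilin ::
  "(complex \<Rightarrow> 'a::ab_group_add \<Rightarrow> 'a) \<Rightarrow> (complex \<Rightarrow> 'b::ab_group_add \<Rightarrow> 'b)
    \<Rightarrow> (complex \<Rightarrow> 'c::ab_group_add \<Rightarrow> 'c) \<Rightarrow> ('a \<Rightarrow> 'b \<Rightarrow> 'c) \<Rightarrow> bool" where
  "bilin sa sb sc f \<longleftrightarrow>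
     (\<forall>x. Vector_Spaces.linear sb sc (f x)) \<and> (\<forall>y. Vector_Spaces.linear sa sc (\<lambda>x. f x y))"

definition trilin ::
  "(complex \<Rightarrow> 'a::ab_group_add \<Rightarrow> 'a) \<Rightarrow> (complex \<Rightarrow> 'c::ab_group_add \<Rightarrow> 'c)
    \<Rightarrow> ('a \<Rightarrow> 'a \<Rightarrow> 'a \<Rightarrow> 'c) \<Rightarrow> bool" where
  "trilin s sc f \<longleftrightarrow>
     (\<forall>x y. Vector_Spaces.linear s sc (f x y)) \<and>
     (\<forall>x z. Vector_Spaces.linear s sc (\<lambda>y. f x y z)) \<and>
     (\<forall>y z. Vector_Spaces.linear s sc (\<lambda>x. f x y z))"

definition sw :: "('a \<times> 'b) list \<Rightarrow> ('a \<Rightarrow> 'b \<Rightarrow> 'c::comm_monoid_add) \<Rightarrow> 'c" where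
  "sw xs f = sum_list (map (\<lambda>(x, y). f x y) xs)"

definition ten_eq ::
  "(complex \<Rightarrow> 'a::ab_group_add \<Rightarrow> 'a) \<Rightarrow> (complex \<Rightarrow> 'b::ab_group_add \<Rightarrow> 'b) \<Rightarrow> ('a \<times> 'b) list \<Rightarrow> ('a \<times> 'b) list \<Rightarrow> bool" where
  "ten_eq sa sb xs ys \<longleftrightarrow>
     (\<forall>g :: 'a \<Rightarrow> 'b \<Rightarrow> complex. bilin sa sb (*) g \<longrightarrow> sw xs g = sw ys g)"

locale comm_calg =
  fixes sm :: "complex \<Rightarrow> 'm::comm_ring_1 \<Rightarrow> 'm"
  assumes vs: "vector_space sm"
    and scale_mult: "\<And>c x y. sm c (x * y) = sm c x * y"

text \<open>A commutative Hopf algebra over the complex numbers; the coproduct of a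
  is given by a Sweedler representation cop a = [(a', a''), ...].\<close>
locale comm_hopf_algebra = comm_calg sm
  for sm :: "complex \<Rightarrow> 'm::comm_ring_1 \<Rightarrow> 'm" +
  fixes cop :: "'m \<Rightarrow> ('m \<times> 'm) list"
    and cou :: "'m \<Rightarrow> complex"
    and S :: "'m \<Rightarrow> 'm"
  assumes cop_linear:
      "\<And>g :: 'm \<Rightarrow> 'm \<Rightarrow> complex. bilin sm sm (*) g \<Longrightarrow>
         Vector_Spaces.linear sm (*) (\<lambda>a. sw (cop a) g)"
    and coassoc:
      "\<And>(h :: 'm \<Rightarrow> 'm \<Rightarrow> 'm \<Rightarrow> complex) a. trilin sm (*) h \<Longrightarrow>
         sw (cop a) (\<lambda>x y. sw (cop x) (\<lambda>u v. h u v y))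
       = sw (cop a) (\<lambda>x y. sw (cop y) (\<lambda>u v. h x u v))"
    and cou_linear: "Vector_Spaces.linear sm (*) cou"
    and counit_left: "\<And>a. sw (cop a) (\<lambda>x y. sm (cou x) y) = a"
    and counit_right: "\<And>a. sw (cop a) (\<lambda>x y. sm (cou y) x) = a"
    and cop_mult:
      "\<And>a b. ten_eq sm sm (cop (a * b)) [(x * u, y * v). (x, y) \<leftarrow> cop a, (u, v) \<leftarrow> cop b]"
    and cop_one: "ten_eq sm sm (cop 1) [(1, 1)]"
    and cou_mult: "\<And>a b. cou (a * b) = cou a * cou b"
    and cou_one: "cou 1 = 1"
    and S_linear: "Vector_Spaces.linear sm sm S"
    and antipode_left: "\<And>a. sw (cop a) (\<lambda>x y. S x * y) = sm (cou a) 1"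
    and antipode_right: "\<And>a. sw (cop a) (\<lambda>x y. x * S y) = sm (cou a) 1"

definition cocommutative :: "(complex \<Rightarrow> 'm::ab_group_add \<Rightarrow> 'm) \<Rightarrow> ('m \<Rightarrow> ('m \<times> 'm) list) \<Rightarrow> bool" where
  "cocommutative sm cop \<longleftrightarrow> (\<forall>a. ten_eq sm sm (cop a) (map prod.swap (cop a)))"

text \<open>A-valued bicharacters on M (r is the bilinear map corresponding to the
  linear map on M tensor M).\<close>
definition bichar ::
  "(complex \<Rightarrow> 'm::comm_ring_1 \<Rightarrow> 'm) \<Rightarrow> ('m \<Rightarrow> ('m \<times> 'm) list) \<Rightarrow> ('m \<Rightarrow> complex)
    \<Rightarrow> (complex \<Rightarrow> 'a::comm_ring_1 \<Rightarrow> 'a) \<Rightarrow> ('m \<Rightarrow> 'm \<Rightarrow> 'a) \<Rightarrow> bool" where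
  "bichar sm cop cou smA r \<longleftrightarrow>
     bilin sm sm smA r \<and>
     (\<forall>a. r 1 a = smA (cou a) 1 \<and> r a 1 = smA (cou a) 1) \<and>
     (\<forall>a b c. r (a * b) c = sw (cop c) (\<lambda>c1 c2. r a c1 * r b c2)) \<and>
     (\<forall>a b c. r a (b * c) = sw (cop a) (\<lambda>a1 a2. r a1 b * r a2 c))"

definition conv ::
  "('m \<Rightarrow> ('m \<times> 'm) list) \<Rightarrow> ('m \<Rightarrow> 'm \<Rightarrow> 'a::comm_ring_1) \<Rightarrow> ('m \<Rightarrow> 'm \<Rightarrow> 'a) \<Rightarrow> 'm \<Rightarrow> 'm \<Rightarrow> 'a" where
  "conv cop r t a b = sw (cop a) (\<lambda>a1 a2. sw (cop b) (\<lambda>b1 b2. r a1 b1 * t a2 b2))"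

definition transp :: "('m \<Rightarrow> 'm \<Rightarrow> 'a) \<Rightarrow> 'm \<Rightarrow> 'm \<Rightarrow> 'a" where
  "transp r a b = r b a"

definition binv :: "('m \<Rightarrow> 'm) \<Rightarrow> ('m \<Rightarrow> 'm \<Rightarrow> 'a) \<Rightarrow> 'm \<Rightarrow> 'm \<Rightarrow> 'a" where
  "binv S r a b = r (S a) b"

definition symz :: "('m \<Rightarrow> ('m \<times> 'm) list) \<Rightarrow> ('m \<Rightarrow> 'm \<Rightarrow> 'a::comm_ring_1) \<Rightarrow> 'm \<Rightarrow> 'm \<Rightarrow> 'a" where
  "symz cop r = conv cop r (transp r)"

text \<open>Elements of M_A = M tensor A are formal sums [(m_i, a_i)].  EQ_r, extended A-linearly:
  m tensor c maps to sum r(m' tensor m'') m''' tensor c.\<close>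
definition EQ :: "('m \<Rightarrow> ('m \<times> 'm) list) \<Rightarrow> ('m \<Rightarrow> 'm \<Rightarrow> 'a::comm_ring_1) \<Rightarrow> ('m \<times> 'a) list \<Rightarrow> ('m \<times> 'a) list" where
  "EQ cop r xs = [(m3, r u v * c). (m, c) \<leftarrow> xs, (m1, m3) \<leftarrow> cop m, (u, v) \<leftarrow> cop m1]"

definition bullet ::
  "('m::comm_ring_1 \<Rightarrow> ('m \<times> 'm) list) \<Rightarrow> ('m \<Rightarrow> 'm \<Rightarrow> 'a::comm_ring_1)
    \<Rightarrow> ('m \<times> 'a) list \<Rightarrow> ('m \<times> 'a) list \<Rightarrow> ('m \<times> 'a) list" where
  "bullet cop t xs ys =
     [(m1 * n1, t m2 n2 * (a * b)). (m, a) \<leftarrow> xs, (n, b) \<leftarrow> ys, (m1, m2) \<leftarrow> cop m, (n1, n2) \<leftarrow> cop n]"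

end

theory Submission
  imports Defs
begin


lemma vs_complex: "vector_space ((*) :: complex \<Rightarrow> complex \<Rightarrow> complex)"
  unfolding vector_space_def module_def by (auto simp: algebra_simps)

locale L = H: comm_hopf_algebra sm cop cou S + A: comm_calg smA
  for sm :: "complex \<Rightarrow> 'm::comm_ring_1 \<Rightarrow> 'm" and cop cou S
  and smA :: "complex \<Rightarrow> 'a::comm_ring_1 \<Rightarrow> 'a" +
  assumes cocomm: "cocommutative sm cop"
begin

abbreviation lin :: "('m \<Rightarrow> complex) \<Rightarrow> bool" where
  "lin f \<equiv> Vector_Spaces.linear sm (*) f"
abbreviation linA :: "('m \<Rightarrow> 'a) \<Rightarrow> bool" where
  "linA f \<equiv> Vector_Spaces.linear sm smA f"
abbreviation linAC :: "('a \<Rightarrow> complex) \<Rightarrow> bool" where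
  "linAC f \<equiv> Vector_Spaces.linear smA (*) f"
abbreviation linAA :: "('a \<Rightarrow> 'a) \<Rightarrow> bool" where
  "linAA f \<equiv> Vector_Spaces.linear smA smA f"
abbreviation linM :: "('m \<Rightarrow> 'm) \<Rightarrow> bool" where
  "linM f \<equiv> Vector_Spaces.linear sm sm f"

lemma lin_iff: "lin f \<longleftrightarrow> (\<forall>x y. f (x + y) = f x + f y) \<and> (\<forall>c x. f (sm c x) = c * f x)"
  using H.vs vs_complex by (simp add: Vector_Spaces.linear_iff)
lemma linA_iff: "linA f \<longleftrightarrow> (\<forall>x y. f (x + y) = f x + f y) \<and> (\<forall>c x. f (sm c x) = smA c (f x))"
  using H.vs A.vs by (simp add: Vector_Spaces.linear_iff)
lemma linAC_iff: "linAC f \<longleftrightarrow> (\<forall>x y. f (x + y) = f x + f y) \<and> (\<forall>c x. f (smA c x) = c * f x)"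
  using A.vs vs_complex by (simp add: Vector_Spaces.linear_iff)
lemma linAA_iff: "linAA f \<longleftrightarrow> (\<forall>x y. f (x + y) = f x + f y) \<and> (\<forall>c x. f (smA c x) = smA c (f x))"
  using A.vs by (simp add: Vector_Spaces.linear_iff)
lemma linM_iff: "linM f \<longleftrightarrow> (\<forall>x y. f (x + y) = f x + f y) \<and> (\<forall>c x. f (sm c x) = sm c (f x))"
  using H.vs by (simp add: Vector_Spaces.linear_iff)

lemma smA_mult_right: "x * smA c y = smA c (x * y)"
  using A.scale_mult[of c y x] by (simp add: mult.commute)
lemma sm_mult_right: "x * sm c y = sm c (x * y)"
  using H.scale_mult[of c y x] by (simp add: mult.commute)

lemma smA_add: "smA c (x + y) = smA c x + smA c y"
  using A.vs by (simp add: vector_space_def module_def)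
lemma smA_assoc: "smA c (smA d x) = smA (c * d) x"
  using A.vs by (simp add: vector_space_def module_def)
lemma sm_add: "sm c (x + y) = sm c x + sm c y"
  using H.vs by (simp add: vector_space_def module_def)
lemma sm_assoc: "sm c (sm d x) = sm (c * d) x"
  using H.vs by (simp add: vector_space_def module_def)
lemma sm_one: "sm 1 x = x"
  using H.vs by (simp add: vector_space_def module_def)
lemma smA_one: "smA 1 x = x"
  using A.vs by (simp add: vector_space_def module_def)

lemma lin_sum: "(\<And>x. x \<in> set xs \<Longrightarrow> lin (f x)) \<Longrightarrow> lin (\<lambda>a. sum_list (map (\<lambda>x. f x a) xs))"
  by (induction xs) (auto simp: lin_iff algebra_simps)
lemma lin_sw: "(\<And>x y. (x,y) \<in> set xs \<Longrightarrow> lin (f x y)) \<Longrightarrow> lin (\<lambda>a. sw xs (\<lambda>x y. f x y a))"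
  unfolding sw_def by (induction xs) (auto simp: lin_iff algebra_simps)
lemma linAC_sw: "(\<And>x y. (x,y) \<in> set xs \<Longrightarrow> linAC (f x y)) \<Longrightarrow> linAC (\<lambda>a. sw xs (\<lambda>x y. f x y a))"
  unfolding sw_def by (induction xs) (auto simp: linAC_iff algebra_simps)
lemma lin_cmult: "lin f \<Longrightarrow> lin (\<lambda>x. c * f x)"
  by (auto simp: lin_iff algebra_simps)
lemma lin_comp_linA: "linA f \<Longrightarrow> linAC g \<Longrightarrow> lin (\<lambda>x. g (f x))"
  by (auto simp: lin_iff linA_iff linAC_iff)
lemma lin_comp_linM: "linM f \<Longrightarrow> lin g \<Longrightarrow> lin (\<lambda>x. g (f x))"
  by (auto simp: lin_iff linM_iff)
lemma linAC_comp: "linAA f \<Longrightarrow> linAC g \<Longrightarrow> linAC (\<lambda>x. g (f x))"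
  by (auto simp: linAA_iff linAC_iff)
lemma linA_multR: "linA f \<Longrightarrow> linA (\<lambda>x. f x * c)"
  by (auto simp: linA_iff distrib_right A.scale_mult)
lemma linA_multL: "linA f \<Longrightarrow> linA (\<lambda>x. c * f x)"
  by (auto simp: linA_iff distrib_left smA_mult_right)
lemma linAA_multL: "linAA (\<lambda>x. c * x)"
  by (auto simp: linAA_iff algebra_simps smA_mult_right)
lemma linM_multL: "linM (\<lambda>x. c * x)"
  by (auto simp: linM_iff algebra_simps sm_mult_right)
lemma linM_multR: "linM (\<lambda>x. x * c)"
  by (auto simp: linM_iff algebra_simps H.scale_mult)
lemma linAC_cmult: "linAC f \<Longrightarrow> linAC (\<lambda>x. c * f x)"
  by (auto simp: linAC_iff algebra_simps)

lemma bilin_iff: "bilin sm sm (*) g \<longleftrightarrow> (\<forall>x. lin (g x)) \<and> (\<forall>y. lin (\<lambda>x. g x y))"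
  by (simp add: bilin_def)
lemma bilinA_iff: "bilin sm smA (*) g \<longleftrightarrow> (\<forall>x. linAC (g x)) \<and> (\<forall>y. lin (\<lambda>x. g x y))"
  by (simp add: bilin_def)

lemma lin_sum_list: "lin f \<Longrightarrow> f (sum_list (map h xs)) = sum_list (map (\<lambda>x. f (h x)) xs)"
  by (induction xs) (auto simp: lin_iff Vector_Spaces.linear_iff dest: spec[of _ 0])
end


fun copn :: "('m \<Rightarrow> ('m \<times> 'm) list) \<Rightarrow> nat \<Rightarrow> 'm \<Rightarrow> 'm list list" where
  "copn cop 0 a = [[a]]"
| "copn cop (Suc k) a = concat (map (\<lambda>(x,y). map (\<lambda>l. x # l) (copn cop k y)) (cop a))"

lemma length_copn: "l \<in> set (copn cop k a) \<Longrightarrow> length l = Suc k"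
  by (induction k arbitrary: a l) auto

lemma sum_list_swap: fixes f :: "'x \<Rightarrow> 'y \<Rightarrow> 'c::comm_monoid_add" shows "sum_list (map (\<lambda>a. sum_list (map (\<lambda>b. f a b) ys)) xs) =
   sum_list (map (\<lambda>b. sum_list (map (\<lambda>a. f a b) xs)) ys)"
  by (induction xs) (auto simp: sum_list_addf)

lemma sw_swap: fixes f :: "'x \<Rightarrow> 'y \<Rightarrow> 'u \<Rightarrow> 'v \<Rightarrow> 'c::comm_monoid_add" shows "sw xs (\<lambda>x y. sw ys (\<lambda>u v. f x y u v)) = sw ys (\<lambda>u v. sw xs (\<lambda>x y. f x y u v))"
  unfolding sw_def using sum_list_swap[of "\<lambda>a b. case a of (x,y) \<Rightarrow> case b of (u,v) \<Rightarrow> f x y u v" ys xs]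
  by (simp add: case_prod_beta')

lemma sum_list_concat_map: "sum_list (map h (concat (map g xs))) = sum_list (map (\<lambda>x. sum_list (map h (g x))) xs)"
  by (induction xs) auto

context L begin

definition DS :: "nat \<Rightarrow> 'm \<Rightarrow> ('m list \<Rightarrow> complex) \<Rightarrow> complex" where
  "DS k a h = sum_list (map h (copn cop k a))"

lemma DS_0[simp]: "DS 0 a h = h [a]"
  by (simp add: DS_def)
lemma DS_Suc: "DS (Suc k) a h = sw (cop a) (\<lambda>x y. DS k y (\<lambda>l. h (x # l)))"
  by (simp add: DS_def sw_def sum_list_concat_map case_prod_beta' o_def)

lemma DS_cong: "(\<And>l. length l = Suc k \<Longrightarrow> h l = h' l) \<Longrightarrow> DS k a h = DS k a h'"
  unfolding DS_def by (rule arg_cong[where f=sum_list], rule map_cong) (auto dest: length_copn)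

lemma DS_add: "DS k a (\<lambda>l. f l + g l) = DS k a f + DS k a g"
  by (simp add: DS_def sum_list_addf)
lemma DS_cmult: "DS k a (\<lambda>l. c * f l) = c * DS k a f"
  by (simp add: DS_def sum_list_const_mult)
lemma DS_sum: "DS k a (\<lambda>l. sum_list (map (\<lambda>y. f y l) ys)) = sum_list (map (\<lambda>y. DS k a (f y)) ys)"
  unfolding DS_def by (rule sum_list_swap)
lemma DS_sw: "DS k a (\<lambda>l. sw ys (\<lambda>u v. f u v l)) = sw ys (\<lambda>u v. DS k a (f u v))"
  unfolding sw_def by (simp add: DS_sum case_prod_beta')
lemma DS_DS: "DS k a (\<lambda>l. DS j b (f l)) = DS j b (\<lambda>l'. DS k a (\<lambda>l. f l l'))"
  unfolding DS_def by (rule sum_list_swap)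

definition mlin :: "nat \<Rightarrow> ('m list \<Rightarrow> complex) \<Rightarrow> bool" where
  "mlin k h \<longleftrightarrow> (\<forall>pre post. length pre + length post = k \<longrightarrow> lin (\<lambda>x. h (pre @ x # post)))"

lemma mlinD: "mlin k h \<Longrightarrow> length pre + length post = k \<Longrightarrow> lin (\<lambda>x. h (pre @ x # post))"
  by (simp add: mlin_def)

lemma mlin_cons: "mlin (Suc k) h \<Longrightarrow> mlin k (\<lambda>l. h (x # l))"
  unfolding mlin_def
proof (intro allI impI)
  fix pre post :: "'m list"
  assume m: "\<forall>pre post. length pre + length post = Suc k \<longrightarrow> lin (\<lambda>x. h (pre @ x # post))"
    and lp: "length pre + length post = k"
  have "lin (\<lambda>y. h ((x # pre) @ y # post))" using m[rule_format, of "x # pre" post] lp by simp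
  then show "lin (\<lambda>y. h (x # pre @ y # post))" by simp
qed

lemma lin_head: "mlin k h \<Longrightarrow> length l = k \<Longrightarrow> lin (\<lambda>x. h (x # l))"
  using mlinD[of k h "[]" l] by simp

lemma lin_DS: "mlin k h \<Longrightarrow> lin (\<lambda>a. DS k a h)"
proof (induction k arbitrary: h)
  case 0
  then show ?case using lin_head[of 0 h "[]"] by simp
next
  case (Suc k)
  have "bilin sm sm (*) (\<lambda>x y. DS k y (\<lambda>l. h (x # l)))"
    unfolding bilin_iff
  proof (intro conjI allI)
    fix x show "lin (\<lambda>y. DS k y (\<lambda>l. h (x # l)))"
      using Suc by (simp add: mlin_cons)
  next
    fix y show "lin (\<lambda>x. DS k y (\<lambda>l. h (x # l)))"
      unfolding DS_def
      by (rule lin_sum) (auto intro: lin_head[OF Suc.prems] dest: length_copn)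
  qed
  from H.cop_linear[OF this] show ?case by (simp add: DS_Suc)
qed

lemma mlin_sum: "(\<And>y. y \<in> set ys \<Longrightarrow> mlin k (h y)) \<Longrightarrow> mlin k (\<lambda>l. sum_list (map (\<lambda>y. h y l) ys))"
  unfolding mlin_def by (auto intro!: lin_sum)

lemma mlin_app_left: "mlin (Suc (i + j)) h \<Longrightarrow> length l2 = Suc j \<Longrightarrow> mlin i (\<lambda>l1. h (l1 @ l2))"
  unfolding mlin_def
proof (intro allI impI)
  fix pre post :: "'m list"
  assume m: "\<forall>pre post. length pre + length post = Suc (i + j) \<longrightarrow> lin (\<lambda>x. h (pre @ x # post))"
    and l: "length l2 = Suc j" and lp: "length pre + length post = i"
  have "lin (\<lambda>x. h (pre @ x # (post @ l2)))" using m l lp by simp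
  then show "lin (\<lambda>x. h ((pre @ x # post) @ l2))" by simp
qed

lemma mlin_app_right: "mlin (Suc (i + j)) h \<Longrightarrow> length l1 = Suc i \<Longrightarrow> mlin j (\<lambda>l2. h (l1 @ l2))"
  unfolding mlin_def
proof (intro allI impI)
  fix pre post :: "'m list"
  assume m: "\<forall>pre post. length pre + length post = Suc (i + j) \<longrightarrow> lin (\<lambda>x. h (pre @ x # post))"
    and l: "length l1 = Suc i" and lp: "length pre + length post = j"
  have "lin (\<lambda>x. h ((l1 @ pre) @ x # post))" using m[rule_format, of "l1 @ pre" post] l lp by simp
  then show "lin (\<lambda>x. h (l1 @ pre @ x # post))" by simp
qed

lemma lin_DS_fun: "(\<And>l. length l = Suc k \<Longrightarrow> lin (f l)) \<Longrightarrow> lin (\<lambda>v. DS k u (\<lambda>l. f l v))"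
  unfolding DS_def by (rule lin_sum) (auto dest: length_copn)

lemma mlin_DS_left: "mlin (Suc (i + j)) h \<Longrightarrow> mlin i (\<lambda>l1. DS j y (\<lambda>l2. h (l1 @ l2)))"
  unfolding DS_def by (rule mlin_sum) (auto intro: mlin_app_left dest: length_copn)

lemma split_DS: "mlin (Suc (i + j)) h \<Longrightarrow>
   DS (Suc (i + j)) a h = sw (cop a) (\<lambda>x y. DS i x (\<lambda>l1. DS j y (\<lambda>l2. h (l1 @ l2))))"
proof (induction i arbitrary: h a)
  case 0
  then show ?case by (simp add: DS_Suc)
next
  case (Suc i)
  define K where "K x u v = DS i u (\<lambda>l1. DS j v (\<lambda>l2. h (x # l1 @ l2)))" for x u v
  have ml: "mlin (Suc (i + j)) (\<lambda>l. h (x # l))" for x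
    using Suc.prems by (simp add: mlin_cons)
  have "DS (Suc (Suc i + j)) a h = sw (cop a) (\<lambda>x y. DS (Suc (i + j)) y (\<lambda>l. h (x # l)))"
    by (simp add: DS_Suc)
  also have "\<dots> = sw (cop a) (\<lambda>x y. sw (cop y) (\<lambda>u v. K x u v))"
    unfolding K_def using Suc.IH[OF ml] by simp
  also have "\<dots> = sw (cop a) (\<lambda>x y. sw (cop x) (\<lambda>u v. K u v y))"
  proof (rule H.coassoc[symmetric])
    show "trilin sm (*) K" unfolding trilin_def
    proof (intro conjI allI)
      fix x u show "lin (K x u)" unfolding K_def
        by (rule lin_DS_fun) (auto intro!: lin_DS mlin_app_right[OF ml])
    next
      fix x v show "lin (\<lambda>u. K x u v)" unfolding K_def
        by (rule lin_DS, rule mlin_DS_left[OF ml])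
    next
      fix u v show "lin (\<lambda>x. K x u v)" unfolding K_def
        by (intro lin_DS_fun) (auto intro!: lin_head[OF Suc.prems])
    qed
  qed
  also have "\<dots> = sw (cop a) (\<lambda>x y. DS (Suc i) x (\<lambda>l1. DS j y (\<lambda>l2. h (l1 @ l2))))"
    by (simp add: DS_Suc K_def)
  finally show ?case .
qed

lemma cocomm_sw: "bilin sm sm (*) g \<Longrightarrow> sw (cop a) g = sw (cop a) (\<lambda>x y. g y x)"
proof -
  assume g: "bilin sm sm (*) g"
  have "sw (cop a) g = sw (map prod.swap (cop a)) g"
    using cocomm g unfolding cocommutative_def ten_eq_def by blast
  also have "\<dots> = sw (cop a) (\<lambda>x y. g y x)"
    by (simp add: sw_def o_def case_prod_beta')
  finally show ?thesis .
qed

definition swapl :: "nat \<Rightarrow> 'x list \<Rightarrow> 'x list" where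
  "swapl i l = l[i := l ! Suc i, Suc i := l ! i]"

lemma swapl_cons: "swapl (Suc i) (x # l) = x # swapl i l"
  by (simp add: swapl_def)
lemma swapl_0: "swapl 0 (x # y # l) = y # x # l"
  by (simp add: swapl_def)

lemma swap_DS: "mlin k h \<Longrightarrow> Suc i \<le> k \<Longrightarrow> DS k a h = DS k a (\<lambda>l. h (swapl i l))"
proof (induction i arbitrary: k a h)
  case 0
  note P = 0
  then obtain j where k: "k = Suc j" by (cases k) auto
  show ?case
  proof (cases j)
    case 0
    have b: "bilin sm sm (*) (\<lambda>x y. h [x, y])"
      unfolding bilin_iff using mlinD[OF P(1)[unfolded k \<open>j=0\<close>], of "[]" "[_]"]
        mlinD[OF P(1)[unfolded k \<open>j=0\<close>], of "[_]" "[]"] by auto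
    show ?thesis using cocomm_sw[OF b, of a] by (simp add: k 0 DS_Suc swapl_0)
  next
    case (Suc j')
    have ml: "mlin (Suc (1 + j')) h" using P k Suc by simp
    have ml2: "mlin (Suc (1 + j')) (\<lambda>l. h (swapl 0 l))"
      unfolding mlin_def
    proof (intro allI impI)
      fix pre post :: "'m list" assume len: "length pre + length post = Suc (1 + j')"
      show "lin (\<lambda>x. h (swapl 0 (pre @ x # post)))"
      proof (cases pre)
        case Nil
        then obtain p ps where "post = p # ps" using len by (cases post) auto
        then show ?thesis using mlinD[OF ml, of "[p]" ps] len Nil by (simp add: swapl_0)
      next
        case (Cons p ps)
        show ?thesis
        proof (cases ps)
          case Nil then show ?thesis using mlinD[OF ml, of "[]" "p # post"] len Cons
            by (simp add: swapl_0)
        next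
          case (Cons q qs)
          then show ?thesis using mlinD[OF ml, of "q # p # qs" post] len \<open>pre = p # ps\<close>
            by (simp add: swapl_0)
        qed
      qed
    qed
    have b: "bilin sm sm (*) (\<lambda>u v. DS j' y (\<lambda>l2. h (u # v # l2)))" for y
      unfolding bilin_iff
    proof (intro conjI allI)
      fix u show "lin (\<lambda>v. DS j' y (\<lambda>l2. h (u # v # l2)))"
        by (rule lin_DS_fun) (use mlinD[OF ml, of "[u]"] in simp)
    next
      fix v show "lin (\<lambda>u. DS j' y (\<lambda>l2. h (u # v # l2)))"
        by (rule lin_DS_fun) (use mlinD[OF ml, of "[]"] in simp)
    qed
    have "DS k a h = sw (cop a) (\<lambda>x y. DS 1 x (\<lambda>l1. DS j' y (\<lambda>l2. h (l1 @ l2))))"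
      using split_DS[OF ml] k Suc by simp
    also have "\<dots> = sw (cop a) (\<lambda>x y. DS 1 x (\<lambda>l1. DS j' y (\<lambda>l2. h (swapl 0 (l1 @ l2)))))"
      by (simp add: DS_Suc cocomm_sw[OF b] swapl_0)
    also have "\<dots> = DS k a (\<lambda>l. h (swapl 0 l))"
      using split_DS[OF ml2] k Suc by simp
    finally show ?thesis .
  qed
next
  case (Suc i)
  then obtain j where k: "k = Suc j" by (cases k) auto
  have "DS k a h = sw (cop a) (\<lambda>x y. DS j y (\<lambda>l. h (x # l)))" by (simp add: k DS_Suc)
  also have "\<dots> = sw (cop a) (\<lambda>x y. DS j y (\<lambda>l. h (x # swapl i l)))"
  proof -
    have "DS j y (\<lambda>l. h (x # l)) = DS j y (\<lambda>l. h (x # swapl i l))" for x y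
      by (rule Suc.IH) (use Suc.prems k in \<open>auto simp: mlin_cons\<close>)
    then show ?thesis by simp
  qed
  also have "\<dots> = DS k a (\<lambda>l. h (swapl (Suc i) l))" by (simp add: k DS_Suc swapl_cons)
  finally show ?case .
qed

end


lemma sw_append: "sw (xs @ ys) F = sw xs F + sw ys F"
  by (simp add: sw_def)
lemma sw_Cons: "sw ((x,y) # xs) F = F x y + sw xs F"
  by (simp add: sw_def)
lemma sw_concat: "sw (concat (map f xs)) F = sum_list (map (\<lambda>x. sw (f x) F) xs)"
  by (induction xs) (auto simp: sw_append sw_def)

lemma sw_comp2: "sw [(f x y u v, g x y u v). (x,y) \<leftarrow> xs, (u,v) \<leftarrow> ys] F
   = sw xs (\<lambda>x y. sw ys (\<lambda>u v. F (f x y u v) (g x y u v)))"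
  by (induction xs) (auto simp: sw_append sw_def sum_list_concat_map case_prod_beta' o_def)

context L begin

lemma DS_mult: "mlin k h \<Longrightarrow> DS k (m * n) h = DS k m (\<lambda>l. DS k n (\<lambda>l'. h (map2 (*) l l')))"
proof (induction k arbitrary: h m n)
  case 0
  then show ?case by simp
next
  case (Suc k)
  define F where "F x y = DS k y (\<lambda>l. h (x # l))" for x y
  have b: "bilin sm sm (*) F"
    unfolding bilin_iff F_def
  proof (intro conjI allI)
    fix x show "lin (\<lambda>y. DS k y (\<lambda>l. h (x # l)))"
      using Suc.prems by (simp add: mlin_cons lin_DS)
  next
    fix y show "lin (\<lambda>x. DS k y (\<lambda>l. h (x # l)))"
      by (rule lin_DS_fun) (rule lin_head[OF Suc.prems], simp)
  qed
  have "DS (Suc k) (m * n) h = sw (cop (m * n)) F" by (simp add: DS_Suc F_def[abs_def])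
  also have "\<dots> = sw [(x * u, y * v). (x, y) \<leftarrow> cop m, (u, v) \<leftarrow> cop n] F"
    using H.cop_mult[of m n] b unfolding ten_eq_def by blast
  also have "\<dots> = sw (cop m) (\<lambda>x y. sw (cop n) (\<lambda>u v. F (x * u) (y * v)))"
    by (rule sw_comp2)
  also have "\<dots> = sw (cop m) (\<lambda>x y. sw (cop n) (\<lambda>u v.
        DS k y (\<lambda>l. DS k v (\<lambda>l'. h (x * u # map2 (*) l l')))))"
    unfolding F_def using Suc.IH Suc.prems by (simp add: mlin_cons)
  also have "\<dots> = DS (Suc k) m (\<lambda>l. DS (Suc k) n (\<lambda>l'. h (map2 (*) l l')))"
    by (simp add: DS_Suc DS_sw) (rule sw_swap)
  finally show ?case .
qed

end


lemma sw_map_swap: "sw xs F = sum_list (map (\<lambda>p. F (fst p) (snd p)) xs)"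
  by (simp add: sw_def case_prod_beta')

context L begin

lemma sw_lin: "lin f \<Longrightarrow> f (sw xs F) = sw xs (\<lambda>x y. f (F x y))"
  unfolding sw_def by (induction xs) (auto simp: lin_iff Vector_Spaces.linear_iff dest: spec[of _ 0])
lemma sw_linA: "linA f \<Longrightarrow> f (sw xs F) = sw xs (\<lambda>x y. f (F x y))"
  unfolding sw_def by (induction xs) (auto simp: linA_iff Vector_Spaces.linear_iff dest: spec[of _ 0])
lemma sw_linAC: "linAC f \<Longrightarrow> f (sw xs F) = sw xs (\<lambda>x y. f (F x y))"
  unfolding sw_def by (induction xs) (auto simp: linAC_iff Vector_Spaces.linear_iff dest: spec[of _ 0])
lemma sw_multR: "sw xs F * (c::'x::comm_ring_1) = sw xs (\<lambda>x y. F x y * c)"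
  by (simp add: sw_def sum_list_mult_const[symmetric] case_prod_beta')
lemma sw_multL: "(c::'x::comm_ring_1) * sw xs F = sw xs (\<lambda>x y. c * F x y)"
  by (simp add: sw_def sum_list_const_mult[symmetric] case_prod_beta')

lemma bichar_bilin: "bichar sm cop cou smA r \<Longrightarrow> linA (r x) \<and> linA (\<lambda>x. r x y)"
  by (simp add: bichar_def bilin_def)

lemma r_antipode_left:
  assumes r: "bichar sm cop cou smA r"
  shows "sw (cop x) (\<lambda>x1 x2. sw (cop y) (\<lambda>y1 y2. r (S x1) y1 * r x2 y2)) = smA (cou x) (smA (cou y) 1)"
proof -
  have mul: "r (a * b) c = sw (cop c) (\<lambda>c1 c2. r a c1 * r b c2)" for a b c
    using r by (simp add: bichar_def)
  have "sw (cop x) (\<lambda>x1 x2. sw (cop y) (\<lambda>y1 y2. r (S x1) y1 * r x2 y2))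
      = sw (cop x) (\<lambda>x1 x2. r (S x1 * x2) y)" by (simp add: mul)
  also have "\<dots> = r (sw (cop x) (\<lambda>x1 x2. S x1 * x2)) y"
    by (rule sym, rule sw_linA[OF conjunct2[OF bichar_bilin[OF r]]])
  also have "\<dots> = r (sm (cou x) 1) y" by (simp add: H.antipode_left)
  also have "\<dots> = smA (cou x) (smA (cou y) 1)"
    using r bichar_bilin[OF r, of _ y] by (simp add: bichar_def linA_iff)
  finally show ?thesis .
qed

lemma r_antipode_right:
  assumes r: "bichar sm cop cou smA r"
  shows "sw (cop x) (\<lambda>x1 x2. sw (cop y) (\<lambda>y1 y2. r x1 y1 * r (S x2) y2)) = smA (cou x) (smA (cou y) 1)"
proof -
  have mul: "r (a * b) c = sw (cop c) (\<lambda>c1 c2. r a c1 * r b c2)" for a b c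
    using r by (simp add: bichar_def)
  have "sw (cop x) (\<lambda>x1 x2. sw (cop y) (\<lambda>y1 y2. r x1 y1 * r (S x2) y2))
      = sw (cop x) (\<lambda>x1 x2. r (x1 * S x2) y)" by (simp add: mul)
  also have "\<dots> = r (sw (cop x) (\<lambda>x1 x2. x1 * S x2)) y"
    by (rule sym, rule sw_linA[OF conjunct2[OF bichar_bilin[OF r]]])
  also have "\<dots> = r (sm (cou x) 1) y" by (simp add: H.antipode_right)
  also have "\<dots> = smA (cou x) (smA (cou y) 1)"
    using r bichar_bilin[OF r, of _ y] by (simp add: bichar_def linA_iff)
  finally show ?thesis .
qed

lemma mlin_nth: "(\<And>l i. length l = Suc k \<Longrightarrow> i \<le> k \<Longrightarrow> lin (\<lambda>x. h (l[i := x]))) \<Longrightarrow> mlin k h"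
  unfolding mlin_def
proof (intro allI impI)
  fix pre post :: "'m list"
  assume H: "\<And>l i. length l = Suc k \<Longrightarrow> i \<le> k \<Longrightarrow> lin (\<lambda>x. h (l[i := x]))"
    and len: "length pre + length post = k"
  have "lin (\<lambda>x. h ((pre @ 0 # post)[length pre := x]))" using H[of "pre @ 0 # post" "length pre"] len by simp
  then show "lin (\<lambda>x. h (pre @ x # post))" by (simp add: list_update_append)
qed

lemma le4: "(i::nat) \<le> 4 \<Longrightarrow> i = 0 \<or> i = 1 \<or> i = 2 \<or> i = 3 \<or> i = 4" by auto

lemma counit_lin: "lin f \<Longrightarrow> sw (cop w) (\<lambda>y z. cou y * f z) = f w"
  using sw_lin[of f "cop w" "\<lambda>y z. sm (cou y) z"] H.counit_left[of w] by (simp add: lin_iff)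
lemma counit_lin2: "lin f \<Longrightarrow> sw (cop w) (\<lambda>y z. cou z * f y) = f w"
  using sw_lin[of f "cop w" "\<lambda>y z. sm (cou z) y"] H.counit_right[of w] by (simp add: lin_iff)

end


context L begin

lemma DS_1: "DS 1 x F = sw (cop x) (\<lambda>u v. F [u, v])"
  using DS_Suc[of 0 x F] by simp

lemma DS_2_left: "mlin 2 F \<Longrightarrow> DS 2 y F = sw (cop y) (\<lambda>x y'. DS 1 x (\<lambda>l1. F (l1 @ [y'])))"
  using split_DS[of 1 0 F y] by (simp add: numeral_2_eq_2)

lemma DS_4_split: "mlin 4 h \<Longrightarrow>
  DS 4 m h = sw (cop m) (\<lambda>x y. sw (cop x) (\<lambda>u v. sw (cop y) (\<lambda>x' y'. sw (cop x') (\<lambda>u' v'. h [u, v, u', v', y']))))"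
proof -
  assume ml: "mlin 4 h"
  have "DS 4 m h = sw (cop m) (\<lambda>x y. DS 1 x (\<lambda>l1. DS 2 y (\<lambda>l2. h (l1 @ l2))))"
    using split_DS[of 1 2 h m] ml by (simp add: eval_nat_numeral)
  also have "\<dots> = sw (cop m) (\<lambda>x y. DS 1 x (\<lambda>l1. sw (cop y) (\<lambda>x' y'. DS 1 x' (\<lambda>l2. h (l1 @ l2 @ [y'])))))"
  proof -
    have "DS 2 y (\<lambda>l2. h (l1 @ l2)) = sw (cop y) (\<lambda>x' y'. DS 1 x' (\<lambda>l2. h (l1 @ l2 @ [y'])))"
      if "length l1 = 2" for l1 y
    proof -
      have ml': "mlin (Suc (1 + 2)) h" using ml by (simp add: eval_nat_numeral)
      have "length l1 = Suc 1" using that by simp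
      from DS_2_left[OF mlin_app_right[OF ml' this]] show ?thesis by simp
    qed
    then show ?thesis by (intro arg_cong[where f="sw (cop m)"] ext DS_cong) simp
  qed
  also have "\<dots> = sw (cop m) (\<lambda>x y. sw (cop x) (\<lambda>u v. sw (cop y) (\<lambda>x' y'. sw (cop x') (\<lambda>u' v'. h [u, v, u', v', y']))))"
    by (simp add: DS_Suc)
  finally show ?thesis .
qed

end

context L begin
lemma pairing_lemma:
  fixes t1 t2 :: "'m \<Rightarrow> 'm \<Rightarrow> 'a" and g :: "'m \<Rightarrow> 'a \<Rightarrow> complex"
  assumes t1: "\<And>x. linA (t1 x)" "\<And>y. linA (\<lambda>x. t1 x y)"
    and t2: "\<And>x. linA (t2 x)" "\<And>y. linA (\<lambda>x. t2 x y)"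
    and pair: "\<And>x y. sw (cop x) (\<lambda>x1 x2. sw (cop y) (\<lambda>y1 y2. t1 x1 y1 * t2 x2 y2)) = smA (cou x) (smA (cou y) 1)"
    and g: "bilin sm smA (*) g"
  shows "sw (cop m) (\<lambda>m1 m3. sw (cop m1) (\<lambda>u v. sw (cop m3) (\<lambda>n1 n3. sw (cop n1)
            (\<lambda>u' v'. g n3 (t2 u' v' * (t1 u v * c)))))) = g m c"
proof -
  have gA: "\<And>w. linAC (g w)" and gM: "\<And>K. lin (\<lambda>x. g x K)" using g by (auto simp: bilinA_iff)
  have R1: "linA F \<Longrightarrow> lin (\<lambda>x. g w (F x))" for F w by (rule lin_comp_linA[OF _ gA])
  define h where "h l = g (l!4) (t2 (l!2) (l!3) * (t1 (l!0) (l!1) * c))" for l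
  define h' where "h' l = g (l!4) (t2 (l!1) (l!3) * (t1 (l!0) (l!2) * c))" for l
  have mh: "mlin 4 h"
  proof (rule mlin_nth)
    fix l :: "'m list" and i :: nat assume "length l = Suc 4" "i \<le> 4"
    then show "lin (\<lambda>x. h (l[i := x]))" unfolding h_def
      by (auto dest!: le4 intro!: R1 gM linA_multL linA_multR t1 t2)
  qed
  have mh': "mlin 4 h'"
  proof (rule mlin_nth)
    fix l :: "'m list" and i :: nat assume "length l = Suc 4" "i \<le> 4"
    then show "lin (\<lambda>x. h' (l[i := x]))" unfolding h'_def
      by (auto dest!: le4 intro!: R1 gM linA_multL linA_multR t1 t2)
  qed
  have "sw (cop m) (\<lambda>m1 m3. sw (cop m1) (\<lambda>u v. sw (cop m3) (\<lambda>n1 n3. sw (cop n1)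
            (\<lambda>u' v'. g n3 (t2 u' v' * (t1 u v * c)))))) = DS 4 m h"
    using DS_4_split[OF mh] by (simp add: h_def)
  also have "\<dots> = DS 4 m (\<lambda>l. h (swapl 1 l))" by (rule swap_DS[OF mh]) simp
  also have "\<dots> = DS 4 m h'"
    by (rule DS_cong) (simp add: h_def h'_def swapl_def nth_list_update numeral_2_eq_2)
  also have "\<dots> = sw (cop m) (\<lambda>x w. sw (cop x) (\<lambda>x1 x2. sw (cop w) (\<lambda>y z. sw (cop y)
            (\<lambda>y1 y2. g z (t2 x2 y2 * (t1 x1 y1 * c))))))"
    using DS_4_split[OF mh'] by (simp add: h'_def)
  also have "\<dots> = sw (cop m) (\<lambda>x w. sw (cop w) (\<lambda>y z. sw (cop x) (\<lambda>x1 x2. sw (cop y)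
            (\<lambda>y1 y2. g z (t2 x2 y2 * (t1 x1 y1 * c))))))"
    by (intro arg_cong[where f="sw (cop m)"] ext) (rule sw_swap)
  also have "\<dots> = sw (cop m) (\<lambda>x w. sw (cop w) (\<lambda>y z. g z (sw (cop x) (\<lambda>x1 x2. sw (cop y)
            (\<lambda>y1 y2. t1 x1 y1 * t2 x2 y2)) * c)))"
  proof -
    have inner: "g z (sw (cop x) (\<lambda>x1 x2. sw (cop y) (\<lambda>y1 y2. t1 x1 y1 * t2 x2 y2)) * c)
      = sw (cop x) (\<lambda>x1 x2. sw (cop y) (\<lambda>y1 y2. g z (t2 x2 y2 * (t1 x1 y1 * c))))" for x y z
      by (simp only: sw_multR sw_linAC[OF gA]) (simp add: ac_simps)
    show ?thesis by (simp only: inner)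
  qed
  also have "\<dots> = sw (cop m) (\<lambda>x w. sw (cop w) (\<lambda>y z. cou x * (cou y * g z c)))"
  proof -
    have sc: "g z (smA a (smA b 1) * c) = a * (b * g z c)" for a b z
      using gA[of z] by (simp add: A.scale_mult[symmetric] linAC_iff)
    show ?thesis by (simp add: pair sc)
  qed
  also have "\<dots> = sw (cop m) (\<lambda>x w. cou x * g w c)"
    by (simp add: sw_multL[symmetric] counit_lin[OF gM])
  also have "\<dots> = g m c" by (rule counit_lin[OF gM])
  finally show ?thesis .
qed

end


context L begin

lemma separate:
  assumes H: "\<And>f. linAC f \<Longrightarrow> f x = f y"
  shows "x = y"
proof (rule ccontr)
  assume ne: "x \<noteq> y"
  interpret VP: vector_space_pair smA "(*) :: complex \<Rightarrow> complex \<Rightarrow> complex"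
    using A.vs vs_complex by (simp add: vector_space_pair_def)
  let ?v = "x - y"
  have ind: "VP.vs1.independent {?v}"
    using ne by (intro VP.vs1.independent_insertI) (auto simp: VP.vs1.span_empty VP.vs1.independent_empty)
  define f where "f = VP.construct {?v} (\<lambda>_. 1)"
  have lf: "linAC f" unfolding f_def by (rule VP.linear_construct[OF ind])
  have "f ?v = 1" unfolding f_def by (rule VP.construct_basis[OF ind]) simp
  moreover have "f ?v = f x - f y" using lf by (simp add: VP.linear_diff)
  ultimately show False using H[OF lf] by simp
qed

lemma cop_linearA:
  assumes F: "bilin sm sm smA F"
  shows "linA (\<lambda>a. sw (cop a) F)"
proof -
  have FF: "lin (\<lambda>a. sw (cop a) (\<lambda>u v. f (F u v)))" if f: "linAC f" for f
  proof (rule H.cop_linear)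
    show "bilin sm sm (*) (\<lambda>u v. f (F u v))"
      using F f unfolding bilin_def by (auto intro: lin_comp_linA)
  qed
  have e: "f (sw (cop a) F) = sw (cop a) (\<lambda>u v. f (F u v))" if "linAC f" for f a
    by (rule sw_linAC[OF that])
  show ?thesis unfolding linA_iff
  proof (intro conjI allI)
    fix x y show "sw (cop (x + y)) F = sw (cop x) F + sw (cop y) F"
    proof (rule separate)
      fix f :: "'a \<Rightarrow> complex" assume f: "linAC f"
      show "f (sw (cop (x + y)) F) = f (sw (cop x) F + sw (cop y) F)"
        using FF[OF f] f by (simp add: e lin_iff linAC_iff)
    qed
  next
    fix c x show "sw (cop (sm c x)) F = smA c (sw (cop x) F)"
    proof (rule separate)
      fix f :: "'a \<Rightarrow> complex" assume f: "linAC f"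
      show "f (sw (cop (sm c x)) F) = f (smA c (sw (cop x) F))"
        using FF[OF f] f by (simp add: e lin_iff linAC_iff)
    qed
  qed
qed

lemma smA_zero: "smA c 0 = 0"
  using smA_add[of c 0 0] by simp

lemma linA_sw: "(\<And>x y. (x,y) \<in> set xs \<Longrightarrow> linA (f x y)) \<Longrightarrow> linA (\<lambda>a. sw xs (\<lambda>x y. f x y a))"
  unfolding sw_def by (induction xs) (auto simp: linA_iff algebra_simps smA_add smA_zero)

lemma linA_mult2: "linA f \<Longrightarrow> linA (\<lambda>x. K * (f x * Q))"
  by (intro linA_multL linA_multR)

lemma conv_bilin:
  assumes r: "bilin sm sm smA r" and t: "bilin sm sm smA t"
  shows "bilin sm sm smA (conv cop r t)"
  unfolding bilin_def conv_def
proof (intro conjI allI)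
  fix a show "linA (\<lambda>b. sw (cop a) (\<lambda>a1 a2. sw (cop b) (\<lambda>b1 b2. r a1 b1 * t a2 b2)))"
  proof (rule linA_sw, rule cop_linearA)
    fix a1 a2 show "bilin sm sm smA (\<lambda>b1 b2. r a1 b1 * t a2 b2)"
      using r t unfolding bilin_def by (auto intro: linA_multL linA_multR)
  qed
next
  fix b show "linA (\<lambda>a. sw (cop a) (\<lambda>a1 a2. sw (cop b) (\<lambda>b1 b2. r a1 b1 * t a2 b2)))"
  proof (rule cop_linearA)
    show "bilin sm sm smA (\<lambda>a1 a2. sw (cop b) (\<lambda>b1 b2. r a1 b1 * t a2 b2))"
      unfolding bilin_def
    proof (intro conjI allI)
      fix a1 show "linA (\<lambda>a2. sw (cop b) (\<lambda>b1 b2. r a1 b1 * t a2 b2))"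
        using t unfolding bilin_def by (intro linA_sw linA_multL) auto
    next
      fix a2 show "linA (\<lambda>a1. sw (cop b) (\<lambda>b1 b2. r a1 b1 * t a2 b2))"
        using r unfolding bilin_def by (intro linA_sw linA_multR) auto
    qed
  qed
qed

lemma transp_bilin: "bilin sm sm smA r \<Longrightarrow> bilin sm sm smA (transp r)"
  by (simp add: bilin_def transp_def[abs_def])

lemma symz_bilin: "bilin sm sm smA r \<Longrightarrow> bilin sm sm smA (symz cop r)"
  unfolding symz_def by (intro conv_bilin transp_bilin)

lemma sw_EQ: "sw (EQ cop q xs) G = sw xs (\<lambda>m c. sw (cop m) (\<lambda>m1 m3. sw (cop m1) (\<lambda>u v. G m3 (q u v * c))))"
  unfolding EQ_def by (induction xs) (auto simp: sw_def sum_list_concat_map case_prod_beta' o_def)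

lemma sw_bullet: "sw (bullet cop t xs ys) G = sw xs (\<lambda>m a. sw ys (\<lambda>n b. sw (cop m) (\<lambda>m1 m2.
      sw (cop n) (\<lambda>n1 n2. G (m1 * n1) (t m2 n2 * (a * b))))))"
  unfolding bullet_def by (induction xs) (auto simp: sw_def sum_list_concat_map case_prod_beta' o_def)

end


context L begin

lemma linA_compM: "linM f \<Longrightarrow> linA F \<Longrightarrow> linA (\<lambda>x. F (f x))"
  by (auto simp: linM_iff linA_iff)

lemma claim1:
  assumes r: "bichar sm cop cou smA r"
  shows "ten_eq sm smA (EQ cop r (EQ cop (binv S r) x)) x \<and> ten_eq sm smA (EQ cop (binv S r) (EQ cop r x)) x"
proof -
  have rl: "linA (r x)" "linA (\<lambda>x. r x y)" for x y using bichar_bilin[OF r] by auto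
  have rS: "linA (\<lambda>x. binv S r x y)" "linA (binv S r x)" for x y
    unfolding binv_def using rl by (auto intro: linA_compM H.S_linear)
  have "sw (EQ cop r (EQ cop (binv S r) x)) g = sw x g" if g: "bilin sm smA (*) g" for g
  proof -
    have "sw (EQ cop r (EQ cop (binv S r) x)) g = sw x (\<lambda>m c. g m c)"
      unfolding sw_EQ
      by (intro arg_cong[where f="sw x"] ext pairing_lemma[OF rS(2) rS(1) rl(1) rl(2) _ g])
         (simp add: binv_def r_antipode_left[OF r])
    then show ?thesis by simp
  qed
  moreover have "sw (EQ cop (binv S r) (EQ cop r x)) g = sw x g" if g: "bilin sm smA (*) g" for g
  proof -
    have "sw (EQ cop (binv S r) (EQ cop r x)) g = sw x (\<lambda>m c. g m c)"
      unfolding sw_EQ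
      by (intro arg_cong[where f="sw x"] ext pairing_lemma[OF rl(1) rl(2) rS(2) rS(1) _ g])
         (simp add: binv_def r_antipode_right[OF r])
    then show ?thesis by simp
  qed
  ultimately show ?thesis unfolding ten_eq_def by blast
qed

lemma EQ_cong:
  assumes q: "bilin sm sm smA q" and e: "ten_eq sm smA xs ys"
  shows "ten_eq sm smA (EQ cop q xs) (EQ cop q ys)"
  unfolding ten_eq_def
proof (intro allI impI)
  fix g :: "'m \<Rightarrow> 'a \<Rightarrow> complex" assume g: "bilin sm smA (*) g"
  have gA: "\<And>w. linAC (g w)" and gM: "\<And>K. lin (\<lambda>x. g x K)" using g by (auto simp: bilinA_iff)
  have ql: "linA (q x)" "linA (\<lambda>x. q x y)" for x y using q by (auto simp: bilin_def)
  let ?G = "\<lambda>m c. sw (cop m) (\<lambda>m1 m3. sw (cop m1) (\<lambda>u v. g m3 (q u v * c)))"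
  have "bilin sm smA (*) ?G" unfolding bilinA_iff
  proof (intro conjI allI)
    fix m show "linAC (?G m)"
      by (intro linAC_sw linAC_comp[OF linAA_multL gA])
  next
    fix c show "lin (\<lambda>m. ?G m c)"
    proof (rule H.cop_linear)
      show "bilin sm sm (*) (\<lambda>m1 m3. sw (cop m1) (\<lambda>u v. g m3 (q u v * c)))"
        unfolding bilin_iff
      proof (intro conjI allI)
        fix m1 show "lin (\<lambda>m3. sw (cop m1) (\<lambda>u v. g m3 (q u v * c)))"
          by (intro lin_sw gM)
      next
        fix m3 show "lin (\<lambda>m1. sw (cop m1) (\<lambda>u v. g m3 (q u v * c)))"
        proof (rule H.cop_linear)
          show "bilin sm sm (*) (\<lambda>u v. g m3 (q u v * c))" unfolding bilin_iff
            by (auto intro!: lin_comp_linA[OF _ gA] linA_multR ql)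
        qed
      qed
    qed
  qed
  then show "sw (EQ cop q xs) g = sw (EQ cop q ys) g"
    using e unfolding sw_EQ ten_eq_def by blast
qed

lemma bullet_cong:
  assumes t: "bilin sm sm smA t" and e1: "ten_eq sm smA xs xs'" and e2: "ten_eq sm smA ys ys'"
  shows "ten_eq sm smA (bullet cop t xs ys) (bullet cop t xs' ys')"
  unfolding ten_eq_def
proof (intro allI impI)
  fix g :: "'m \<Rightarrow> 'a \<Rightarrow> complex" assume g: "bilin sm smA (*) g"
  have gA: "\<And>w. linAC (g w)" and gM: "\<And>K. lin (\<lambda>x. g x K)" using g by (auto simp: bilinA_iff)
  have tl: "linA (t x)" "linA (\<lambda>x. t x y)" for x y using t by (auto simp: bilin_def)
  define P where "P m a n b = sw (cop m) (\<lambda>m1 m2. sw (cop n) (\<lambda>n1 n2. g (m1 * n1) (t m2 n2 * (a * b))))"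
    for m a n b
  have P1: "lin (\<lambda>m. P m a n b)" for a n b unfolding P_def
  proof (rule H.cop_linear)
    show "bilin sm sm (*) (\<lambda>m1 m2. sw (cop n) (\<lambda>n1 n2. g (m1 * n1) (t m2 n2 * (a * b))))"
      unfolding bilin_iff
    proof (intro conjI allI)
      fix m1 show "lin (\<lambda>m2. sw (cop n) (\<lambda>n1 n2. g (m1 * n1) (t m2 n2 * (a * b))))"
        by (intro lin_sw lin_comp_linA[OF _ gA] linA_multR tl)
    next
      fix m2 show "lin (\<lambda>m1. sw (cop n) (\<lambda>n1 n2. g (m1 * n1) (t m2 n2 * (a * b))))"
        by (intro lin_sw lin_comp_linM[OF linM_multR gM])
    qed
  qed
  have P2: "lin (\<lambda>n. P m a n b)" for m a b unfolding P_def
  proof (rule lin_sw, rule H.cop_linear)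
    fix m1 m2 show "bilin sm sm (*) (\<lambda>n1 n2. g (m1 * n1) (t m2 n2 * (a * b)))"
      unfolding bilin_iff
      by (auto intro!: lin_comp_linA[OF _ gA] linA_multR tl lin_comp_linM[OF linM_multL gM])
  qed
  have PA: "linAC (\<lambda>a. P m a n b)" "linAC (\<lambda>b. P m a n b)" for m a n b unfolding P_def
    by (intro linAC_sw linAC_comp[OF _ gA] linAA_multL;
        auto simp: linAA_iff algebra_simps A.scale_mult smA_mult_right smA_add)+
  have b1: "bilin sm smA (*) (\<lambda>m a. sw ys' (\<lambda>n b. P m a n b))"
    unfolding bilinA_iff by (auto intro!: linAC_sw lin_sw PA P1)
  have b2: "bilin sm smA (*) (\<lambda>n b. P m a n b)" for m a
    unfolding bilinA_iff by (auto intro!: PA P2)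
  have "sw (bullet cop t xs ys) g = sw xs (\<lambda>m a. sw ys (\<lambda>n b. P m a n b))"
    unfolding sw_bullet P_def ..
  also have "\<dots> = sw xs (\<lambda>m a. sw ys' (\<lambda>n b. P m a n b))"
    using e2 b2 unfolding ten_eq_def by simp
  also have "\<dots> = sw xs' (\<lambda>m a. sw ys' (\<lambda>n b. P m a n b))"
    using e1 b1 unfolding ten_eq_def by blast
  also have "\<dots> = sw (bullet cop t xs' ys') g"
    unfolding sw_bullet P_def ..
  finally show "sw (bullet cop t xs ys) g = sw (bullet cop t xs' ys') g" .
qed

end


context L begin

lemma mlin_nthD: "mlin k h \<Longrightarrow> length l = Suc k \<Longrightarrow> j \<le> k \<Longrightarrow> lin (\<lambda>x. h (l[j := x]))"
proof -
  assume m: "mlin k h" and l: "length l = Suc k" and j: "j \<le> k"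
  have "l[j := x] = take j l @ x # drop (Suc j) l" for x
    using l j by (simp add: upd_conv_take_nth_drop)
  moreover have "lin (\<lambda>x. h (take j l @ x # drop (Suc j) l))"
    by (rule mlinD[OF m]) (use l j in simp)
  ultimately show ?thesis by simp
qed

lemma swapl_update:
  assumes "i < k" "length l = Suc k" "j \<le> k"
  shows "swapl i (l[j := x]) = (swapl i l)[(if j = i then Suc i else if j = Suc i then i else j) := x]"
  using assms by (auto simp: swapl_def list_eq_iff_nth_eq nth_list_update)

lemma length_swapl[simp]: "length (swapl i l) = length l"
  by (simp add: swapl_def)

lemma mlin_swapl: "mlin k h \<Longrightarrow> i < k \<Longrightarrow> mlin k (\<lambda>l. h (swapl i l))"
proof (rule mlin_nth)
  fix l :: "'m list" and j assume m: "mlin k h" and i: "i < k" and l: "length l = Suc k" and j: "j \<le> k"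
  have "lin (\<lambda>x. h ((swapl i l)[(if j = i then Suc i else if j = Suc i then i else j) := x]))"
    by (rule mlin_nthD[OF m]) (use l i j in auto)
  then show "lin (\<lambda>x. h (swapl i (l[j := x])))" using swapl_update[OF i l j] by simp
qed

lemma swap_DS': "mlin k h \<Longrightarrow> i < k \<Longrightarrow> DS k a h = DS k a (\<lambda>l. h (swapl i l))"
  by (rule swap_DS) auto

lemma mlin_DS_inner: "(\<And>l'. length l' = Suc j \<Longrightarrow> mlin k (\<lambda>l. F l l')) \<Longrightarrow> mlin k (\<lambda>l. DS j b (\<lambda>l'. F l l'))"
  unfolding mlin_def by (auto intro!: lin_DS_fun)

lemma le2: "(i::nat) \<le> 2 \<Longrightarrow> i = 0 \<or> i = 1 \<or> i = 2" by auto

lemma DS2L: "mlin 2 F \<Longrightarrow> DS 2 m F = sw (cop m) (\<lambda>x y. sw (cop x) (\<lambda>u v. F [u, v, y]))"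
  by (simp add: DS_2_left DS_Suc)

lemma DS2R: "DS 2 m F = sw (cop m) (\<lambda>x y. sw (cop y) (\<lambda>u v. F [x, u, v]))"
  by (simp add: DS_Suc numeral_2_eq_2)

lemma COMP: assumes H: "mlin 4 H"
  shows "DS 2 m (\<lambda>l. DS 2 (l!2) (\<lambda>l2. H (l!0 # l!1 # l2))) = DS 4 m H"
proof -
  have H2: "mlin 2 (\<lambda>l2. H (u # v # l2))" for u v
    using H mlin_cons[of "Suc 2" H u] mlin_cons[of 2 _ v] by (simp add: eval_nat_numeral)
  have mG: "mlin 2 (\<lambda>l. DS 2 (l!2) (\<lambda>l2. H (l!0 # l!1 # l2)))"
  proof (rule mlin_nth)
    fix l :: "'m list" and i :: nat assume l: "length l = Suc 2" and i: "i \<le> 2"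
    have a: "lin (\<lambda>x. H (x # w # l2))" if "length l2 = 3" for w l2
      by (rule lin_head[OF H]) (use that in simp)
    have b: "lin (\<lambda>x. H (w # x # l2))" if "length l2 = 3" for w l2
      using mlinD[OF H, of "[w]" l2] that by simp
    show "lin (\<lambda>x. DS 2 (l[i := x] ! 2) (\<lambda>l2. H (l[i := x] ! 0 # l[i := x] ! 1 # l2)))"
      using le2[OF i] l by (auto intro!: lin_DS_fun a b lin_DS H2)
  qed
  have "DS 4 m H = sw (cop m) (\<lambda>x y. DS 1 x (\<lambda>l1. DS 2 y (\<lambda>l2. H (l1 @ l2))))"
    using split_DS[of 1 2 H m] H by (simp add: eval_nat_numeral)
  also have "\<dots> = DS 2 m (\<lambda>l. DS 2 (l!2) (\<lambda>l2. H (l!0 # l!1 # l2)))"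
    by (subst DS2L[OF mG]) (simp add: DS_Suc)
  finally show ?thesis by simp
qed

lemma REF: assumes H: "mlin 4 H"
  shows "DS 2 m (\<lambda>l. sw (cop (l!0)) (\<lambda>a1 a2. sw (cop (l!1)) (\<lambda>c1 c2. H [a1, a2, c1, c2, l!2]))) = DS 4 m H"
proof -
  have Hl: "lin (\<lambda>x. H (pre @ x # post))" if "length pre + length post = 4" for pre post
    using mlinD[OF H that] .
  have mG: "mlin 2 (\<lambda>l. sw (cop (l!0)) (\<lambda>a1 a2. sw (cop (l!1)) (\<lambda>c1 c2. H [a1, a2, c1, c2, l!2])))"
  proof (rule mlin_nth)
    fix l :: "'m list" and i :: nat assume l: "length l = Suc 2" and i: "i \<le> 2"
    have c0: "lin (\<lambda>x. sw (cop x) (\<lambda>a1 a2. sw (cop w) (\<lambda>c1 c2. H [a1, a2, c1, c2, z])))" for w z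
    proof (rule H.cop_linear)
      show "bilin sm sm (*) (\<lambda>a1 a2. sw (cop w) (\<lambda>c1 c2. H [a1, a2, c1, c2, z]))"
        unfolding bilin_iff using Hl[of "[]"] Hl[of "[_]"]
        by (auto intro!: lin_sw)
    qed
    have c1: "lin (\<lambda>x. sw (cop w) (\<lambda>a1 a2. sw (cop x) (\<lambda>c1 c2. H [a1, a2, c1, c2, z])))" for w z
    proof (rule lin_sw, rule H.cop_linear)
      fix a1 a2 show "bilin sm sm (*) (\<lambda>c1 c2. H [a1, a2, c1, c2, z])"
        unfolding bilin_iff using Hl[of "[_, _]"] Hl[of "[_, _, _]"]
        by auto
    qed
    have c2: "lin (\<lambda>x. sw (cop w) (\<lambda>a1 a2. sw (cop w') (\<lambda>c1 c2. H [a1, a2, c1, c2, x])))" for w w'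
      using Hl[of "[_, _, _, _]" "[]"] by (auto intro!: lin_sw)
    show "lin (\<lambda>x. sw (cop (l[i := x] ! 0)) (\<lambda>a1 a2. sw (cop (l[i := x] ! 1)) (\<lambda>c1 c2. H [a1, a2, c1, c2, l[i := x] ! 2])))"
      using le2[OF i] l c0 c1 c2 by auto
  qed
  have F3: "mlin (Suc (1 + 1)) (\<lambda>l1. H (l1 @ [y]))" for y
    using mlin_app_left[of 3 0 H "[y]"] H by (simp add: eval_nat_numeral)
  have "DS 4 m H = sw (cop m) (\<lambda>x y. DS 3 x (\<lambda>l1. DS 0 y (\<lambda>l2. H (l1 @ l2))))"
    using split_DS[of 3 0 H m] H by (simp add: eval_nat_numeral)
  also have "\<dots> = sw (cop m) (\<lambda>x y. sw (cop x) (\<lambda>p q. DS 1 p (\<lambda>l1. DS 1 q (\<lambda>l2. H (l1 @ l2 @ [y])))))"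
    using split_DS[OF F3] by (simp add: eval_nat_numeral)
  also have "\<dots> = DS 2 m (\<lambda>l. sw (cop (l!0)) (\<lambda>a1 a2. sw (cop (l!1)) (\<lambda>c1 c2. H [a1, a2, c1, c2, l!2])))"
    by (subst DS2L[OF mG]) (simp add: DS_Suc)
  finally show ?thesis by simp
qed

end


context L begin

lemma mlin_sw_inner: "(\<And>u v. mlin k (\<lambda>l. F u v l)) \<Longrightarrow> mlin k (\<lambda>l. sw ys (\<lambda>u v. F u v l))"
  unfolding mlin_def by (auto intro!: lin_sw)

lemma sw_single: "sw [(x, y)] F = F x y"
  by (simp add: sw_def)

lemma EXP:
  assumes r: "bichar sm cop cou smA r" and g: "bilin sm smA (*) g"
  shows "g w (r (x0 * y0) (x1 * y1) * K) =
    sw (cop x0) (\<lambda>a1 a2. sw (cop x1) (\<lambda>c1 c2. sw (cop y0) (\<lambda>b1 b2. sw (cop y1) (\<lambda>d1 d2.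
      g w (r a1 c1 * r a2 d1 * (r b1 c2 * r b2 d2) * K)))))"
proof -
  have gA: "\<And>w. linAC (g w)" using g by (auto simp: bilinA_iff)
  have rl: "linA (r x)" "linA (\<lambda>x. r x y)" for x y using bichar_bilin[OF r] by auto
  have mulL: "r (a * b) c = sw (cop c) (\<lambda>c1 c2. r a c1 * r b c2)" for a b c
    using r by (simp add: bichar_def)
  have mulR: "r a (b * c) = sw (cop a) (\<lambda>a1 a2. r a1 b * r a2 c)" for a b c
    using r by (simp add: bichar_def)
  have bl: "bilin sm sm (*) (\<lambda>e1 e2. g w (r x0 e1 * r y0 e2 * K))"
    unfolding bilin_iff by (auto intro!: lin_comp_linA[OF _ gA] linA_multR linA_multL rl)
  have "g w (r (x0 * y0) (x1 * y1) * K) = sw (cop (x1 * y1)) (\<lambda>e1 e2. g w (r x0 e1 * r y0 e2 * K))"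
    by (simp only: mulL sw_multR sw_linAC[OF gA])
  also have "\<dots> = sw [(x * u, y * v). (x, y) \<leftarrow> cop x1, (u, v) \<leftarrow> cop y1] (\<lambda>e1 e2. g w (r x0 e1 * r y0 e2 * K))"
    using H.cop_mult[of x1 y1] bl unfolding ten_eq_def by blast
  also have "\<dots> = sw (cop x1) (\<lambda>c1 c2. sw (cop y1) (\<lambda>d1 d2. g w (r x0 (c1 * d1) * r y0 (c2 * d2) * K)))"
    by (rule sw_comp2)
  also have "\<dots> = sw (cop x1) (\<lambda>c1 c2. sw (cop y1) (\<lambda>d1 d2. sw (cop y0) (\<lambda>b1 b2. sw (cop x0) (\<lambda>a1 a2.
      g w (r a1 c1 * r a2 d1 * (r b1 c2 * r b2 d2) * K)))))"
    by (simp only: mulR sw_multR sw_multL sw_linAC[OF gA] mult.assoc)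
  also have "\<dots> = sw (cop x1) (\<lambda>c1 c2. sw (cop y1) (\<lambda>d1 d2. sw (cop x0) (\<lambda>a1 a2. sw (cop y0) (\<lambda>b1 b2.
      g w (r a1 c1 * r a2 d1 * (r b1 c2 * r b2 d2) * K)))))"
    by (intro arg_cong[where f="sw _"] ext) (rule sw_swap)
  also have "\<dots> = sw (cop x1) (\<lambda>c1 c2. sw (cop x0) (\<lambda>a1 a2. sw (cop y1) (\<lambda>d1 d2. sw (cop y0) (\<lambda>b1 b2.
      g w (r a1 c1 * r a2 d1 * (r b1 c2 * r b2 d2) * K)))))"
    by (intro arg_cong[where f="sw _"] ext) (rule sw_swap)
  also have "\<dots> = sw (cop x0) (\<lambda>a1 a2. sw (cop x1) (\<lambda>c1 c2. sw (cop y1) (\<lambda>d1 d2. sw (cop y0) (\<lambda>b1 b2.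
      g w (r a1 c1 * r a2 d1 * (r b1 c2 * r b2 d2) * K)))))"
    by (rule sw_swap)
  also have "\<dots> = sw (cop x0) (\<lambda>a1 a2. sw (cop x1) (\<lambda>c1 c2. sw (cop y0) (\<lambda>b1 b2. sw (cop y1) (\<lambda>d1 d2.
      g w (r a1 c1 * r a2 d1 * (r b1 c2 * r b2 d2) * K)))))"
    by (intro arg_cong[where f="sw _"] ext) (rule sw_swap)
  finally show ?thesis .
qed


definition PsiL :: "('m \<Rightarrow> 'm \<Rightarrow> 'a) \<Rightarrow> ('m \<Rightarrow> 'a \<Rightarrow> complex) \<Rightarrow> 'a \<Rightarrow> 'm list \<Rightarrow> 'm list \<Rightarrow> complex" where
  "PsiL r g K M N = g (M!4 * N!4) (r (M!0) (M!2) * r (M!1) (N!2) * (r (N!0) (M!3) * r (N!1) (N!3)) * K)"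

lemma LHS4:
  assumes r: "bichar sm cop cou smA r" and g: "bilin sm smA (*) g"
  shows "sw (EQ cop r (bullet cop (\<lambda>x y. smA (cou x * cou y) 1) [(m, a)] [(n, b)])) g
    = DS 4 m (\<lambda>M. DS 4 n (\<lambda>N. PsiL r g (a * b) M N))"
proof -
  define K where "K = a * b"
  have gA: "\<And>w. linAC (g w)" and gM: "\<And>K. lin (\<lambda>x. g x K)" using g by (auto simp: bilinA_iff)
  have R1: "linA F \<Longrightarrow> lin (\<lambda>x. g w (F x))" for F w by (rule lin_comp_linA[OF _ gA])
  have R2: "linM F \<Longrightarrow> lin (\<lambda>x. g (F x) Q)" for F Q by (rule lin_comp_linM[OF _ gM])
  have rl: "linA (r x)" "linA (\<lambda>x. r x y)" for x y using bichar_bilin[OF r] by auto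
  define Psi0 where "Psi0 M C = sw (cop M) (\<lambda>m1 m3. sw (cop m1) (\<lambda>u v. g m3 (r u v * C)))" for M C
  define h0 where "h0 l = g (l!2) (r (l!0) (l!1) * K)" for l
  have mh0: "mlin 2 h0"
  proof (rule mlin_nth)
    fix l :: "'m list" and i :: nat assume "length l = Suc 2" "i \<le> 2"
    then show "lin (\<lambda>x. h0 (l[i := x]))" unfolding h0_def
      by (auto dest!: le2 intro!: R1 gM linA_multL linA_multR rl)
  qed
  have P0: "Psi0 M K = DS 2 M h0" for M
    by (simp add: DS2L[OF mh0] Psi0_def h0_def)
  have linP0: "lin (\<lambda>M. Psi0 M K)" unfolding P0 by (rule lin_DS[OF mh0])
  have P0A: "linAC (Psi0 M)" for M unfolding Psi0_def
    by (intro linAC_sw linAC_comp[OF linAA_multL gA])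
  have "sw (EQ cop r (bullet cop (\<lambda>x y. smA (cou x * cou y) 1) [(m, a)] [(n, b)])) g
      = sw (cop m) (\<lambda>m1 m2. sw (cop n) (\<lambda>n1 n2. Psi0 (m1 * n1) (smA (cou m2 * cou n2) 1 * K)))"
    by (simp add: sw_EQ sw_bullet sw_single Psi0_def K_def)
  also have "\<dots> = sw (cop m) (\<lambda>m1 m2. cou m2 * sw (cop n) (\<lambda>n1 n2. cou n2 * Psi0 (m1 * n1) K))"
  proof -
    have e: "Psi0 M (smA c 1 * K) = c * Psi0 M K" for M c
    proof -
      have "smA c 1 * K = smA c K" using A.scale_mult[of c 1 K] by simp
      then show ?thesis using P0A[of M] by (simp add: linAC_iff)
    qed
    show ?thesis by (simp add: e sw_multL mult.assoc)
  qed
  also have "\<dots> = sw (cop m) (\<lambda>m1 m2. cou m2 * Psi0 (m1 * n) K)"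
    using counit_lin2[OF lin_comp_linM[OF linM_multL linP0]] by simp
  also have "\<dots> = Psi0 (m * n) K"
    using counit_lin2[OF lin_comp_linM[OF linM_multR linP0]] by simp
  also have "\<dots> = DS 2 m (\<lambda>l. DS 2 n (\<lambda>l'. h0 (map2 (*) l l')))"
    by (simp add: P0 DS_mult[OF mh0])
  also have "\<dots> = DS 2 m (\<lambda>l. DS 2 n (\<lambda>l'. g (l!2 * l'!2) (r (l!0 * l'!0) (l!1 * l'!1) * K)))"
    by (intro DS_cong) (simp add: h0_def)
  also have "\<dots> = DS 2 m (\<lambda>l. DS 2 n (\<lambda>l'. sw (cop (l!0)) (\<lambda>a1 a2. sw (cop (l!1)) (\<lambda>c1 c2.
       sw (cop (l'!0)) (\<lambda>b1 b2. sw (cop (l'!1)) (\<lambda>d1 d2.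
         g (l!2 * l'!2) (r a1 c1 * r a2 d1 * (r b1 c2 * r b2 d2) * K)))))))"
    by (simp only: EXP[OF r g])
  also have "\<dots> = DS 2 m (\<lambda>l. sw (cop (l!0)) (\<lambda>a1 a2. sw (cop (l!1)) (\<lambda>c1 c2.
       DS 2 n (\<lambda>l'. sw (cop (l'!0)) (\<lambda>b1 b2. sw (cop (l'!1)) (\<lambda>d1 d2.
         g (l!2 * l'!2) (r a1 c1 * r a2 d1 * (r b1 c2 * r b2 d2) * K)))))))"
    by (simp only: DS_sw)
  also have "\<dots> = DS 2 m (\<lambda>l. sw (cop (l!0)) (\<lambda>a1 a2. sw (cop (l!1)) (\<lambda>c1 c2.
       DS 4 n (\<lambda>N. PsiL r g K [a1, a2, c1, c2, l!2] N))))"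
  proof -
    have R: "DS 2 n (\<lambda>l'. sw (cop (l'!0)) (\<lambda>b1 b2. sw (cop (l'!1)) (\<lambda>d1 d2.
         PsiL r g K M [b1, b2, d1, d2, l'!2]))) = DS 4 n (\<lambda>N. PsiL r g K M N)" for M
    proof (rule REF, rule mlin_nth)
      fix l :: "'m list" and i :: nat assume "length l = Suc 4" "i \<le> 4"
      then show "lin (\<lambda>x. PsiL r g K M (l[i := x]))" unfolding PsiL_def
        by (auto dest!: le4 intro!: R1 R2 linM_multL linA_multL linA_multR rl)
    qed
    have eq: "DS 2 n (\<lambda>l'. sw (cop (l'!0)) (\<lambda>b1 b2. sw (cop (l'!1)) (\<lambda>d1 d2.
         g (x * l'!2) (r a1 c1 * r a2 d1 * (r b1 c2 * r b2 d2) * K))))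
       = DS 4 n (\<lambda>N. PsiL r g K [a1, a2, c1, c2, x] N)" for a1 a2 c1 c2 x
      using R[of "[a1, a2, c1, c2, x]"] by (simp add: PsiL_def)
    show ?thesis by (simp only: eq)
  qed
  also have "\<dots> = DS 4 m (\<lambda>M. DS 4 n (\<lambda>N. PsiL r g K M N))"
  proof -
    have "mlin 4 (\<lambda>M. DS 4 n (\<lambda>N. PsiL r g K M N))"
    proof (rule mlin_DS_inner, rule mlin_nth)
      fix l :: "'m list" and N :: "'m list" and i :: nat assume "length l = Suc 4" "i \<le> 4"
      then show "lin (\<lambda>x. PsiL r g K (l[i := x]) N)" unfolding PsiL_def
        by (auto dest!: le4 intro!: R1 R2 linM_multR linA_multL linA_multR rl)
    qed
    from REF[OF this] show ?thesis by simp
  qed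
  finally show ?thesis by (simp add: K_def)
qed

end


context L begin

definition beta :: "('m \<Rightarrow> 'm \<Rightarrow> 'a) \<Rightarrow> ('m \<Rightarrow> 'a \<Rightarrow> complex) \<Rightarrow> 'm list \<Rightarrow> 'm list \<Rightarrow> 'a \<Rightarrow> 'a \<Rightarrow> complex" where
  "beta r g lM lN A B = g (lM!0 * lN!0) (r (lM!1) (lN!1) * r (lN!2) (lM!2) * (A * B))"

definition PhiR :: "('m \<Rightarrow> 'm \<Rightarrow> 'a) \<Rightarrow> ('m \<Rightarrow> 'a \<Rightarrow> complex) \<Rightarrow> 'a \<Rightarrow> 'a \<Rightarrow> 'm list \<Rightarrow> 'm list \<Rightarrow> complex" where
  "PhiR r g a b M N = g (M!2 * N!2) (r (M!3) (N!3) * r (N!4) (M!4) * ((r (M!0) (M!1) * a) * (r (N!0) (N!1) * b)))"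

lemma len3: "length l = 3 \<Longrightarrow> [l!0, l!Suc 0, l!2] = l"
  by (auto simp: numeral_3_eq_3 length_Suc_conv)

lemma RHS4:
  assumes r: "bichar sm cop cou smA r" and g: "bilin sm smA (*) g"
  shows "sw (bullet cop (symz cop r) (EQ cop r [(m, a)]) (EQ cop r [(n, b)])) g
    = DS 4 m (\<lambda>M. DS 4 n (\<lambda>N. PhiR r g a b M N))"
proof -
  have gA: "\<And>w. linAC (g w)" and gM: "\<And>K. lin (\<lambda>x. g x K)" using g by (auto simp: bilinA_iff)
  have R1: "linA F \<Longrightarrow> lin (\<lambda>x. g w (F x))" for F w by (rule lin_comp_linA[OF _ gA])
  have R2: "linM F \<Longrightarrow> lin (\<lambda>x. g (F x) Q)" for F Q by (rule lin_comp_linM[OF _ gM])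
  have rl: "linA (r x)" "linA (\<lambda>x. r x y)" for x y using bichar_bilin[OF r] by auto
  define Bul where "Bul M A N B = sw (cop M) (\<lambda>M1 M2. sw (cop N) (\<lambda>N1 N2. g (M1 * N1) (symz cop r M2 N2 * (A * B))))" for M A N B
  have mb: "mlin 2 (\<lambda>lN. beta r g lM lN A B)" for lM A B
  proof (rule mlin_nth)
    fix l :: "'m list" and i :: nat assume "length l = Suc 2" "i \<le> 2"
    then show "lin (\<lambda>x. beta r g lM (l[i := x]) A B)" unfolding beta_def
      by (auto dest!: le2 intro!: R1 R2 linM_multL linA_multL linA_multR rl)
  qed
  have mb': "mlin 2 (\<lambda>lM. beta r g lM lN A B)" for lN A B
  proof (rule mlin_nth)
    fix l :: "'m list" and i :: nat assume "length l = Suc 2" "i \<le> 2"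
    then show "lin (\<lambda>x. beta r g (l[i := x]) lN A B)" unfolding beta_def
      by (auto dest!: le2 intro!: R1 R2 linM_multR linA_multL linA_multR rl)
  qed
  have bA: "linA F \<Longrightarrow> lin (\<lambda>x. beta r g lM lN A (F x))" for F lM lN A unfolding beta_def
    by (intro R1 linA_multL)
  have bA': "linA F \<Longrightarrow> lin (\<lambda>x. beta r g lM lN (F x) B)" for F lM lN B unfolding beta_def
    by (intro R1 linA_multL linA_multR)
  have Bul_eq: "Bul M A N B = DS 2 M (\<lambda>lM. DS 2 N (\<lambda>lN. beta r g lM lN A B))" for M A N B
  proof -
    have "Bul M A N B = sw (cop M) (\<lambda>M1 M2. sw (cop N) (\<lambda>N1 N2. sw (cop M2) (\<lambda>a1 a2. sw (cop N2) (\<lambda>b1 b2.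
        g (M1 * N1) (r a1 b1 * r b2 a2 * (A * B))))))"
      unfolding Bul_def symz_def conv_def transp_def by (simp only: sw_multR sw_linAC[OF gA])
    also have "\<dots> = sw (cop M) (\<lambda>M1 M2. sw (cop M2) (\<lambda>a1 a2. sw (cop N) (\<lambda>N1 N2. sw (cop N2) (\<lambda>b1 b2.
        g (M1 * N1) (r a1 b1 * r b2 a2 * (A * B))))))"
      by (intro arg_cong[where f="sw _"] ext) (rule sw_swap)
    also have "\<dots> = DS 2 M (\<lambda>lM. DS 2 N (\<lambda>lN. beta r g lM lN A B))"
      by (simp add: DS2R beta_def)
    finally show ?thesis .
  qed
  have "sw (bullet cop (symz cop r) (EQ cop r [(m, a)]) (EQ cop r [(n, b)])) g
      = sw (EQ cop r [(m, a)]) (\<lambda>M A. sw (EQ cop r [(n, b)]) (\<lambda>N B. Bul M A N B))"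
    by (simp add: sw_bullet Bul_def)
  also have "\<dots> = sw (EQ cop r [(m, a)]) (\<lambda>M A. DS 2 n (\<lambda>l'.
       DS 2 M (\<lambda>lM. DS 2 (l'!2) (\<lambda>lN. beta r g lM lN A (r (l'!0) (l'!1) * b)))))"
  proof -
    have "sw (EQ cop r [(n, b)]) (\<lambda>N B. Bul M A N B) = DS 2 n (\<lambda>l'.
       DS 2 M (\<lambda>lM. DS 2 (l'!2) (\<lambda>lN. beta r g lM lN A (r (l'!0) (l'!1) * b))))" for M A
    proof -
      have ml: "mlin 2 (\<lambda>l'. DS 2 M (\<lambda>lM. DS 2 (l'!2) (\<lambda>lN. beta r g lM lN A (r (l'!0) (l'!1) * b))))"
      proof (rule mlin_DS_inner, rule mlin_nth)
        fix l :: "'m list" and lM :: "'m list" and i :: nat assume "length l = Suc 2" "i \<le> 2"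
        then show "lin (\<lambda>x. DS 2 (l[i := x] ! 2) (\<lambda>lN. beta r g lM lN A (r (l[i := x] ! 0) (l[i := x] ! 1) * b)))"
          by (auto dest!: le2 intro!: lin_DS_fun lin_DS mb bA linA_multR rl)
      qed
      show ?thesis
        by (subst DS2L[OF ml]) (simp add: sw_EQ sw_single Bul_eq)
    qed
    then show ?thesis by simp
  qed
  also have "\<dots> = DS 2 m (\<lambda>l. DS 2 n (\<lambda>l'.
       DS 2 (l!2) (\<lambda>lM. DS 2 (l'!2) (\<lambda>lN. beta r g lM lN (r (l!0) (l!1) * a) (r (l'!0) (l'!1) * b)))))"
  proof -
    have ml: "mlin 2 (\<lambda>l. DS 2 n (\<lambda>l'.
       DS 2 (l!2) (\<lambda>lM. DS 2 (l'!2) (\<lambda>lN. beta r g lM lN (r (l!0) (l!1) * a) (r (l'!0) (l'!1) * b)))))"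
    proof (rule mlin_DS_inner, rule mlin_nth)
      fix l :: "'m list" and l' :: "'m list" and i :: nat assume "length l = Suc 2" "i \<le> 2"
      then show "lin (\<lambda>x. DS 2 (l[i := x] ! 2) (\<lambda>lM. DS 2 (l'!2) (\<lambda>lN. beta r g lM lN (r (l[i := x] ! 0) (l[i := x] ! 1) * a) (r (l'!0) (l'!1) * b))))"
        by (auto dest!: le2 intro!: lin_DS_fun lin_DS mlin_DS_inner mb' bA' linA_multR rl)
    qed
    show ?thesis
      by (subst DS2L[OF ml]) (simp add: sw_EQ sw_single)
  qed
  also have "\<dots> = DS 2 m (\<lambda>l. DS 2 (l!2) (\<lambda>lM. DS 2 n (\<lambda>l'.
       DS 2 (l'!2) (\<lambda>lN. beta r g lM lN (r (l!0) (l!1) * a) (r (l'!0) (l'!1) * b)))))"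
    by (rule DS_cong) (rule DS_DS)
  also have "\<dots> = DS 4 m (\<lambda>M. DS 2 n (\<lambda>l'.
       DS 2 (l'!2) (\<lambda>lN. beta r g [M!2, M!3, M!4] lN (r (M!0) (M!1) * a) (r (l'!0) (l'!1) * b))))"
  proof -
    have ml: "mlin 4 (\<lambda>M. DS 2 n (\<lambda>l'.
       DS 2 (l'!2) (\<lambda>lN. beta r g [M!2, M!3, M!4] lN (r (M!0) (M!1) * a) (r (l'!0) (l'!1) * b))))"
    proof (rule mlin_DS_inner, rule mlin_DS_inner, rule mlin_nth)
      fix l :: "'m list" and l' lN :: "'m list" and i :: nat assume "length l = Suc 4" "i \<le> 4"
      then show "lin (\<lambda>x. beta r g [l[i := x]!2, l[i := x]!3, l[i := x]!4] lN (r (l[i := x]!0) (l[i := x]!1) * a) (r (l'!0) (l'!1) * b))"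
        unfolding beta_def by (auto dest!: le4 intro!: R1 R2 linM_multR linA_multL linA_multR rl)
    qed
    show ?thesis unfolding COMP[OF ml, symmetric]
      by (intro DS_cong) (auto simp: len3)
  qed
  also have "\<dots> = DS 4 m (\<lambda>M. DS 4 n (\<lambda>N. PhiR r g a b M N))"
  proof -
    have ml: "mlin 4 (\<lambda>N. beta r g [M!2, M!3, M!4] [N!2, N!3, N!4] (r (M!0) (M!1) * a) (r (N!0) (N!1) * b))" for M
    proof (rule mlin_nth)
      fix l :: "'m list" and i :: nat assume "length l = Suc 4" "i \<le> 4"
      then show "lin (\<lambda>x. beta r g [M!2, M!3, M!4] [l[i := x]!2, l[i := x]!3, l[i := x]!4] (r (M!0) (M!1) * a) (r (l[i := x]!0) (l[i := x]!1) * b))"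
        unfolding beta_def by (auto dest!: le4 intro!: R1 R2 linM_multL linA_multL linA_multR rl)
    qed
    have "DS 2 n (\<lambda>l'. DS 2 (l'!2) (\<lambda>lN. beta r g [M!2, M!3, M!4] lN (r (M!0) (M!1) * a) (r (l'!0) (l'!1) * b)))
       = DS 4 n (\<lambda>N. PhiR r g a b M N)" for M
    proof -
      have e1: "DS 4 n (\<lambda>N. PhiR r g a b M N) = DS 4 n (\<lambda>N. beta r g [M!2, M!3, M!4] [N!2, N!3, N!4] (r (M!0) (M!1) * a) (r (N!0) (N!1) * b))"
        by (rule DS_cong) (simp add: beta_def PhiR_def)
      show ?thesis unfolding e1 COMP[OF ml, symmetric]
        by (intro DS_cong) (auto simp: len3)
    qed
    then show ?thesis by simp
  qed
  finally show ?thesis .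
qed

end


context L begin

lemma swap_chain: "mlin k h \<Longrightarrow> (\<forall>i\<in>set js. i < k) \<Longrightarrow> DS k a h = DS k a (\<lambda>l. h (foldr swapl js l))"
proof (induction js arbitrary: h)
  case Nil
  then show ?case by simp
next
  case (Cons i js)
  have "DS k a h = DS k a (\<lambda>l. h (swapl i l))" using Cons.prems by (intro swap_DS') auto
  also have "\<dots> = DS k a (\<lambda>l. h (swapl i (foldr swapl js l)))"
    using Cons.IH[of "\<lambda>l. h (swapl i l)"] Cons.prems mlin_swapl by auto
  finally show ?case by simp
qed

lemma len5: "length l = Suc 4 \<Longrightarrow> \<exists>x0 x1 x2 x3 x4. l = [x0, x1, x2, x3, x4]"
  by (auto simp: eval_nat_numeral length_Suc_conv)

lemma core4:
  assumes r: "bichar sm cop cou smA r" and g: "bilin sm smA (*) g"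
  shows "DS 4 m (\<lambda>M. DS 4 n (\<lambda>N. PsiL r g (a * b) M N)) = DS 4 m (\<lambda>M. DS 4 n (\<lambda>N. PhiR r g a b M N))"
proof -
  have gA: "\<And>w. linAC (g w)" and gM: "\<And>K. lin (\<lambda>x. g x K)" using g by (auto simp: bilinA_iff)
  have R1: "linA F \<Longrightarrow> lin (\<lambda>x. g w (F x))" for F w by (rule lin_comp_linA[OF _ gA])
  have R2: "linM F \<Longrightarrow> lin (\<lambda>x. g (F x) Q)" for F Q by (rule lin_comp_linM[OF _ gM])
  have rl: "linA (r x)" "linA (\<lambda>x. r x y)" for x y using bichar_bilin[OF r] by auto
  have mN: "mlin 4 (\<lambda>N. PsiL r g (a * b) M N)" for M
  proof (rule mlin_nth)
    fix l :: "'m list" and i :: nat assume "length l = Suc 4" "i \<le> 4"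
    then show "lin (\<lambda>x. PsiL r g (a * b) M (l[i := x]))" unfolding PsiL_def
      by (auto dest!: le4 intro!: R1 R2 linM_multL linA_multL linA_multR rl)
  qed
  have mM: "mlin 4 (\<lambda>M. DS 4 n (\<lambda>N. PsiL r g (a * b) M N))"
  proof (rule mlin_DS_inner, rule mlin_nth)
    fix l :: "'m list" and N :: "'m list" and i :: nat assume "length l = Suc 4" "i \<le> 4"
    then show "lin (\<lambda>x. PsiL r g (a * b) (l[i := x]) N)" unfolding PsiL_def
      by (auto dest!: le4 intro!: R1 R2 linM_multR linA_multL linA_multR rl)
  qed
  have "DS 4 m (\<lambda>M. DS 4 n (\<lambda>N. PsiL r g (a * b) M N))
     = DS 4 m (\<lambda>M. DS 4 n (\<lambda>N. PsiL r g (a * b) (foldr swapl [1, 3, 2] M) N))"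
    by (rule swap_chain[OF mM]) simp
  also have "\<dots> = DS 4 m (\<lambda>M. DS 4 n (\<lambda>N. PsiL r g (a * b) (foldr swapl [1, 3, 2] M) (foldr swapl [0, 1, 2, 1, 3, 2] N)))"
    by (intro DS_cong swap_chain[OF mN]) simp
  also have "\<dots> = DS 4 m (\<lambda>M. DS 4 n (\<lambda>N. PhiR r g a b M N))"
  proof (intro DS_cong)
    fix M N :: "'m list" assume M: "length M = Suc 4" and N: "length N = Suc 4"
    obtain x0 x1 x2 x3 x4 where Me: "M = [x0, x1, x2, x3, x4]" using len5[OF M] by blast
    obtain y0 y1 y2 y3 y4 where Ne: "N = [y0, y1, y2, y3, y4]" using len5[OF N] by blast
    show "PsiL r g (a * b) (foldr swapl [1, 3, 2] M) (foldr swapl [0, 1, 2, 1, 3, 2] N) = PhiR r g a b M N"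
      unfolding Me Ne by (simp add: PsiL_def PhiR_def swapl_def ac_simps)
  qed
  finally show ?thesis .
qed

end


lemma ten_eq_trans: "ten_eq sa sb xs ys \<Longrightarrow> ten_eq sa sb ys zs \<Longrightarrow> ten_eq sa sb xs zs"
  unfolding ten_eq_def by auto
lemma ten_eq_sym: "ten_eq sa sb xs ys \<Longrightarrow> ten_eq sa sb ys xs"
  unfolding ten_eq_def by auto

context L begin

lemma sw_EQ_dec: "sw (EQ cop q xs) G = sw xs (\<lambda>m c. sw (EQ cop q [(m, c)]) G)"
  by (simp add: sw_EQ sw_single)

lemma sw_bullet_dec: "sw (bullet cop t xs ys) G = sw xs (\<lambda>m a. sw ys (\<lambda>n b. sw (bullet cop t [(m, a)] [(n, b)]) G))"
  by (simp add: sw_bullet sw_single)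

lemma L4:
  assumes r: "bichar sm cop cou smA r"
  shows "ten_eq sm smA (EQ cop r (bullet cop (\<lambda>x y. smA (cou x * cou y) 1) xs ys))
                       (bullet cop (symz cop r) (EQ cop r xs) (EQ cop r ys))"
  unfolding ten_eq_def
proof (intro allI impI)
  fix g :: "'m \<Rightarrow> 'a \<Rightarrow> complex" assume g: "bilin sm smA (*) g"
  let ?t0 = "\<lambda>x y. smA (cou x * cou y) 1"
  have single: "sw (EQ cop r (bullet cop ?t0 [(m, a)] [(n, b)])) g
      = sw (bullet cop (symz cop r) (EQ cop r [(m, a)]) (EQ cop r [(n, b)])) g" for m a n b
    using LHS4[OF r g] RHS4[OF r g] core4[OF r g] by simp
  have "sw (EQ cop r (bullet cop ?t0 xs ys)) g
      = sw xs (\<lambda>m a. sw ys (\<lambda>n b. sw (EQ cop r (bullet cop ?t0 [(m, a)] [(n, b)])) g))"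
    by (simp add: sw_EQ sw_bullet sw_single)
  also have "\<dots> = sw xs (\<lambda>m a. sw ys (\<lambda>n b. sw (bullet cop (symz cop r) (EQ cop r [(m, a)]) (EQ cop r [(n, b)])) g))"
    by (simp only: single)
  also have "\<dots> = sw xs (\<lambda>m a. sw ys (\<lambda>n b. sw (EQ cop r [(m, a)]) (\<lambda>M A. sw (EQ cop r [(n, b)]) (\<lambda>N B.
      sw (bullet cop (symz cop r) [(M, A)] [(N, B)]) g))))"
    by (simp add: sw_EQ sw_bullet sw_single)
  also have "\<dots> = sw xs (\<lambda>m a. sw (EQ cop r [(m, a)]) (\<lambda>M A. sw ys (\<lambda>n b. sw (EQ cop r [(n, b)]) (\<lambda>N B.
      sw (bullet cop (symz cop r) [(M, A)] [(N, B)]) g))))"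
    by (intro arg_cong[where f="sw xs"] ext) (rule sw_swap[symmetric])
  also have "\<dots> = sw (bullet cop (symz cop r) (EQ cop r xs) (EQ cop r ys)) g"
    by (simp add: sw_EQ sw_bullet sw_single)
  finally show "sw (EQ cop r (bullet cop ?t0 xs ys)) g = sw (bullet cop (symz cop r) (EQ cop r xs) (EQ cop r ys)) g" .
qed

end


context L begin

lemma binv_bilin: "bichar sm cop cou smA r \<Longrightarrow> bilin sm sm smA (binv S r)"
  using bichar_bilin[of r] unfolding bilin_def binv_def
  by (auto intro: linA_compM H.S_linear)

lemma bichar_bilin': "bichar sm cop cou smA r \<Longrightarrow> bilin sm sm smA r"
  by (simp add: bichar_def)

lemma claim2:
  assumes r1: "bichar sm cop cou smA r1" and r2: "bichar sm cop cou smA r2"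
  shows "ten_eq sm smA
               (EQ cop r2 (EQ cop (binv S r1) (bullet cop (symz cop r1) x y)))
               (bullet cop (symz cop r2) (EQ cop r2 (EQ cop (binv S r1) x))
                                         (EQ cop r2 (EQ cop (binv S r1) y)))"
proof -
  let ?t0 = "\<lambda>x y. smA (cou x * cou y) 1"
  define x0 where "x0 = EQ cop (binv S r1) x"
  define y0 where "y0 = EQ cop (binv S r1) y"
  define Z where "Z = bullet cop ?t0 x0 y0"
  have A1: "ten_eq sm smA (EQ cop r1 x0) x" unfolding x0_def using claim1[OF r1] by blast
  have A2: "ten_eq sm smA (EQ cop r1 y0) y" unfolding y0_def using claim1[OF r1] by blast
  have B: "ten_eq sm smA (bullet cop (symz cop r1) (EQ cop r1 x0) (EQ cop r1 y0)) (bullet cop (symz cop r1) x y)"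
    by (rule bullet_cong[OF symz_bilin[OF bichar_bilin'[OF r1]] A1 A2])
  have C: "ten_eq sm smA (EQ cop r1 Z) (bullet cop (symz cop r1) (EQ cop r1 x0) (EQ cop r1 y0))"
    unfolding Z_def by (rule L4[OF r1])
  have BC: "ten_eq sm smA (bullet cop (symz cop r1) x y) (EQ cop r1 Z)"
    by (rule ten_eq_sym, rule ten_eq_trans[OF C B])
  have D: "ten_eq sm smA (EQ cop (binv S r1) (bullet cop (symz cop r1) x y)) Z"
    by (rule ten_eq_trans[OF EQ_cong[OF binv_bilin[OF r1] BC]]) (use claim1[OF r1] in blast)
  have E: "ten_eq sm smA (EQ cop r2 (EQ cop (binv S r1) (bullet cop (symz cop r1) x y))) (EQ cop r2 Z)"
    by (rule EQ_cong[OF bichar_bilin'[OF r2] D])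
  have F: "ten_eq sm smA (EQ cop r2 Z) (bullet cop (symz cop r2) (EQ cop r2 x0) (EQ cop r2 y0))"
    unfolding Z_def by (rule L4[OF r2])
  show ?thesis using ten_eq_trans[OF E F] unfolding x0_def y0_def .
qed

end

theorem corollary2p8:
  fixes sm :: "complex \<Rightarrow> 'm::comm_ring_1 \<Rightarrow> 'm"
    and cop :: "'m \<Rightarrow> ('m \<times> 'm) list"
    and cou :: "'m \<Rightarrow> complex"
    and S :: "'m \<Rightarrow> 'm"
    and smA :: "complex \<Rightarrow> 'a::comm_ring_1 \<Rightarrow> 'a"
  assumes "comm_hopf_algebra sm cop cou S"
    and "cocommutative sm cop"
    and "comm_calg smA"
  shows "(\<forall>r. bichar sm cop cou smA r \<longrightarrow>
            (\<forall>x. ten_eq sm smA (EQ cop r (EQ cop (binv S r) x)) x \<and>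
                 ten_eq sm smA (EQ cop (binv S r) (EQ cop r x)) x))
       \<and> (\<forall>r1 r2. bichar sm cop cou smA r1 \<longrightarrow> bichar sm cop cou smA r2 \<longrightarrow>
            (\<forall>x y. ten_eq sm smA
               (EQ cop r2 (EQ cop (binv S r1) (bullet cop (symz cop r1) x y)))
               (bullet cop (symz cop r2) (EQ cop r2 (EQ cop (binv S r1) x))
                                         (EQ cop r2 (EQ cop (binv S r1) y)))))"
proof -
  interpret L sm cop cou S smA
    using assms by (simp add: L_def L_axioms_def)
  show ?thesis using claim1 claim2 by blast
qed


end
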